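(* For every $r\ge1$ and $k\in\{0,1,2\}$, $\textsc{dof}(r,k,2)=\dim\mathcal{S}_r^-\Lambda^k(\square_2)$.
   Context: $\square_n:=[-1,1]^n$. For integers $a,b$ use the convention $\binom{a}{b}:=0$ if $b<0$ or $a<b$. Define \[ \textsc{dof}(r,k,n):=\sum_{d=k}^{\min\{n,\lfloor r/2\rfloor+k\}}2^{n-d}\binom{n}{d}\left(\binom{r-d+2k-1}{r-d+k-1}\binom{r-d+k-1}{d-k}+\binom{r-d+2k}{k}\binom{r-d+k-1}{d-k-1}\right). \] Form monomials: $x^\alpha dx_\sigma:=x_1^{\alpha_1}\cdots x_n^{\alpha_n}\,dx_{\sigma(1)}\wedge\cdots\wedge dx_{\sigma(k)}$ for $\alpha\in\mathbb{N}^n$ and $\sigma=\{\sigma(1)<\dots<\sigma(k)\}\subset\{1,\dots,n\}$. $\mathcal{H}_r\Lambda^k$ is the span of form monomials with $|\alpha|=r$, $|\sigma|=k$ ($0$ if $r<0$ or $k\notin\{0,\dots,n\}$); $\mathcal{P}_r\Lambda^k:=\bigoplus_{j=0}^r\mathcal{H}_j\Lambda^k$. $d$ is the exterior derivative; the Koszul operator is $\kappa(x^\alpha dx_\sigma)=\sum_{i=1}^k(-1)^{i+1}x^\alpha x_{\sigma(i)}\,dx_{\sigma(1)}\wedge\cdots\wedge\widehat{dx_{\sigma(i)}}\wedge\cdots\wedge dx_{\sigma(k)}$, extended linearly. $\mathrm{ldeg}(x^\alpha dx_\sigma):=\#\{i\notin\sigma:\alpha_i=1\}$; $\mathcal{H}_{r,l}\Lambda^k$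 is the span of monomials in $\mathcal{H}_r\Lambda^k$ with linear degree $\ge l$; $\mathcal{J}_r\Lambda^k:=\sum_{l\ge1}\kappa\mathcal{H}_{r+l-1,l}\Lambda^{k+1}$; $\mathcal{S}_r\Lambda^k:=\mathcal{P}_r\Lambda^k+\mathcal{J}_r\Lambda^k+d\mathcal{J}_{r+1}\Lambda^{k-1}$; and for $r\ge1$, $\mathcal{S}_r^-\Lambda^k:=\mathcal{S}_{r-1}\Lambda^k+\kappa\mathcal{S}_{r-1}\Lambda^{k+1}$, with spaces on $\square_n$ being restrictions of the spaces on $\mathbb{R}^n$. *)

theory Defs
  imports "HOL-Analysis.Analysis" "HOL-Library.Function_Algebras"
begin

definition fscale :: "real \<Rightarrow> ('a \<Rightarrow> real) \<Rightarrow> ('a \<Rightarrow> real)" where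
  "fscale c f = (\<lambda>x. c * f x)"

abbreviation fspan :: "('a \<Rightarrow> real) set \<Rightarrow> ('a \<Rightarrow> real) set" where
  "fspan \<equiv> module.span fscale"

abbreviation fdim :: "('a \<Rightarrow> real) set \<Rightarrow> nat" where
  "fdim \<equiv> vector_space.dim fscale"

text \<open>A polynomial form is represented by its coefficient function:
  the value at (alpha, sigma) is the coefficient of x^alpha dx_sigma, where sigma
  is a set of indices, the wedge being taken in increasing order.\<close>

type_synonym form = "(nat \<Rightarrow> nat) \<times> nat set \<Rightarrow> real"

definition mono :: "(nat \<Rightarrow> nat) \<Rightarrow> nat set \<Rightarrow> form" where
  "mono \<alpha> \<sigma> = (\<lambda>p. if p = (\<alpha>, \<sigma>) then 1 else 0)"

definition supp :: "form \<Rightarrow> ((nat \<Rightarrow> nat) \<times> nat set) set" where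
  "supp \<omega> = {p. \<omega> p \<noteq> 0}"

definition linext :: "((nat \<Rightarrow> nat) \<Rightarrow> nat set \<Rightarrow> form) \<Rightarrow> form \<Rightarrow> form" where
  "linext T \<omega> = (\<lambda>q. \<Sum>p\<in>supp \<omega>. \<omega> p * T (fst p) (snd p) q)"

definition psign :: "nat set \<Rightarrow> nat \<Rightarrow> real" where
  "psign \<sigma> j = (-1) ^ card {i\<in>\<sigma>. i < j}"

text \<open>Koszul operator on a monomial:
  kappa(x^a dx_s) = sum_i (-1)^(i+1) x^a x_{s(i)} dx_{s - s(i)}\<close>
definition kappa_mono :: "(nat \<Rightarrow> nat) \<Rightarrow> nat set \<Rightarrow> form" where
  "kappa_mono \<alpha> \<sigma> = (\<lambda>q. \<Sum>j\<in>\<sigma>. psign \<sigma> j * mono (\<alpha>(j := Suc (\<alpha> j))) (\<sigma> - {j}) q)"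

definition kappa :: "form \<Rightarrow> form" where
  "kappa = linext kappa_mono"

text \<open>exterior derivative on a monomial:
  d(x^a dx_s) = sum_j a_j x^(a - e_j) dx_j \<and> dx_s\<close>
definition d_mono :: "nat \<Rightarrow> (nat \<Rightarrow> nat) \<Rightarrow> nat set \<Rightarrow> form" where
  "d_mono n \<alpha> \<sigma> = (\<lambda>q. \<Sum>j\<in>{j. j < n \<and> j \<notin> \<sigma> \<and> 0 < \<alpha> j}.
      real (\<alpha> j) * psign \<sigma> j * mono (\<alpha>(j := \<alpha> j - 1)) (insert j \<sigma>) q)"

definition ext_d :: "nat \<Rightarrow> form \<Rightarrow> form" where
  "ext_d n = linext (d_mono n)"

definition ldeg :: "nat \<Rightarrow> (nat \<Rightarrow> nat) \<Rightarrow> nat set \<Rightarrow> nat" where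
  "ldeg n \<alpha> \<sigma> = card {i. i < n \<and> i \<notin> \<sigma> \<and> \<alpha> i = 1}"

text \<open>form monomials of R^n with |alpha| = r, |sigma| = k, linear degree >= l
  (k an integer: no monomials for k < 0 or k > n)\<close>
definition monosL :: "nat \<Rightarrow> nat \<Rightarrow> int \<Rightarrow> nat \<Rightarrow> form set" where
  "monosL n r k l = {mono \<alpha> \<sigma> | \<alpha> \<sigma>. (\<forall>i\<ge>n. \<alpha> i = 0) \<and> (\<Sum>i<n. \<alpha> i) = r
      \<and> \<sigma> \<subseteq> {..<n} \<and> int (card \<sigma>) = k \<and> ldeg n \<alpha> \<sigma> \<ge> l}"

definition HH :: "nat \<Rightarrow> nat \<Rightarrow> int \<Rightarrow> form set" where
  "HH n r k = fspan (monosL n r k 0)"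

definition HHl :: "nat \<Rightarrow> nat \<Rightarrow> nat \<Rightarrow> int \<Rightarrow> form set" where
  "HHl n r l k = fspan (monosL n r k l)"

definition PP :: "nat \<Rightarrow> nat \<Rightarrow> int \<Rightarrow> form set" where
  "PP n r k = fspan (\<Union>j\<in>{..r}. HH n j k)"

definition JJ :: "nat \<Rightarrow> nat \<Rightarrow> int \<Rightarrow> form set" where
  "JJ n r k = fspan (\<Union>l\<in>{l. 1 \<le> l}. kappa ` HHl n (r + l - 1) l (k + 1))"

definition SS :: "nat \<Rightarrow> nat \<Rightarrow> int \<Rightarrow> form set" where
  "SS n r k = fspan (PP n r k \<union> JJ n r k \<union> ext_d n ` JJ n (r + 1) (k - 1))"

text \<open>S^-_r Lambda^k, for r >= 1\<close>
definition SSminus :: "nat \<Rightarrow> nat \<Rightarrow> int \<Rightarrow> form set" where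
  "SSminus n r k = fspan (SS n (r - 1) k \<union> kappa ` SS n (r - 1) (k + 1))"

definition cube :: "nat \<Rightarrow> (nat \<Rightarrow> real) set" where
  "cube n = {x. (\<forall>i<n. -1 \<le> x i \<and> x i \<le> 1) \<and> (\<forall>i\<ge>n. x i = 0)}"

definition eval_form :: "nat \<Rightarrow> form \<Rightarrow> (nat \<Rightarrow> real) \<Rightarrow> nat set \<Rightarrow> real" where
  "eval_form n \<omega> x \<sigma> = (\<Sum>\<alpha>\<in>{\<alpha>. \<omega> (\<alpha>, \<sigma>) \<noteq> 0}. \<omega> (\<alpha>, \<sigma>) * (\<Prod>i<n. x i ^ \<alpha> i))"

definition restrict_cube :: "nat \<Rightarrow> form \<Rightarrow> (nat \<Rightarrow> real) \<times> nat set \<Rightarrow> real" where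
  "restrict_cube n \<omega> = (\<lambda>(x, \<sigma>). if x \<in> cube n then eval_form n \<omega> x \<sigma> else 0)"

definition bin :: "int \<Rightarrow> int \<Rightarrow> int" where
  "bin a b = (if b < 0 \<or> a < b then 0 else int (nat a choose nat b))"

definition dof :: "int \<Rightarrow> int \<Rightarrow> int \<Rightarrow> int" where
  "dof r k n = (\<Sum>d\<in>{k..min n (r div 2 + k)}. 2 ^ nat (n - d) * bin n d *
      (bin (r - d + 2*k - 1) (r - d + k - 1) * bin (r - d + k - 1) (d - k)
       + bin (r - d + 2*k) k * bin (r - d + k - 1) (d - k - 1)))"

end

theory Submission
  imports Defs
begin

interpretation FV: vector_space "fscale :: real \<Rightarrow> ('a \<Rightarrow> real) \<Rightarrow> ('a \<Rightarrow> real)"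
  by unfold_locales (auto simp: fscale_def fun_eq_iff algebra_simps)

lemma fscale_apply: "fscale c f x = c * f x"
  by (simp add: fscale_def)

definition fin :: "form \<Rightarrow> bool" where "fin \<omega> \<longleftrightarrow> finite (supp \<omega>)"

lemma fin_zero [simp]: "fin 0"
  by (simp add: fin_def supp_def)

lemma fin_zero' [simp]: "fin (\<lambda>x. 0)"
  by (simp add: fin_def supp_def)

lemma fin_add_scale: "fin a \<Longrightarrow> fin b \<Longrightarrow> fin (fscale c a + b)"
  unfolding fin_def
  by (rule finite_subset[of _ "supp a \<union> supp b"]) (auto simp: supp_def fscale_def)

lemma fin_add: "fin a \<Longrightarrow> fin b \<Longrightarrow> fin (a + b)"
  using fin_add_scale[of a b 1] by (simp add: fscale_def)

lemma fin_scale: "fin a \<Longrightarrow> fin (fscale c a)"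
  using fin_add_scale[of a 0 c] by simp

lemma fin_mono [simp]: "fin (mono \<alpha> \<sigma>)"
  unfolding fin_def supp_def mono_def by simp

lemma supp_mono: "supp (mono \<alpha> \<sigma>) = {(\<alpha>, \<sigma>)}"
  unfolding supp_def mono_def by auto

lemma fin_sum: "(\<And>j. j \<in> J \<Longrightarrow> fin (f j)) \<Longrightarrow> fin (\<lambda>q. \<Sum>j\<in>J. f j q)"
proof (cases "finite J")
  case True
  assume h: "\<And>j. j \<in> J \<Longrightarrow> fin (f j)"
  show ?thesis unfolding fin_def
  proof (rule finite_subset[of _ "\<Union>j\<in>J. supp (f j)"])
    show "supp (\<lambda>q. \<Sum>j\<in>J. f j q) \<subseteq> (\<Union>j\<in>J. supp (f j))"
    proof
      fix q assume "q \<in> supp (\<lambda>q. \<Sum>j\<in>J. f j q)"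
      then have "(\<Sum>j\<in>J. f j q) \<noteq> 0" by (simp add: supp_def)
      then obtain j where "j \<in> J" "f j q \<noteq> 0" by (meson sum.neutral)
      then show "q \<in> (\<Union>j\<in>J. supp (f j))" by (auto simp: supp_def)
    qed
    show "finite (\<Union>j\<in>J. supp (f j))" using True h by (auto simp: fin_def)
  qed
next
  case False then show ?thesis by (simp add: fin_def supp_def)
qed

lemma fin_times: "fin f \<Longrightarrow> fin (\<lambda>q. c * f q)"
  using fin_scale[of f c] by (simp add: fscale_def)

lemma fin_kappa_mono [simp]: "fin (kappa_mono \<alpha> \<sigma>)"
  unfolding kappa_mono_def by (rule fin_sum) (rule fin_times, simp)

lemma fin_d_mono [simp]: "fin (d_mono n \<alpha> \<sigma>)"
  unfolding d_mono_def by (rule fin_sum) (rule fin_times, simp)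

lemma fin_span: "x \<in> FV.span S \<Longrightarrow> (\<And>x. x \<in> S \<Longrightarrow> fin x) \<Longrightarrow> fin x"
  by (induction rule: FV.span_induct_alt) (auto intro: fin_add_scale)

lemma linext_eq:
  assumes "finite F" "supp \<omega> \<subseteq> F"
  shows "linext T \<omega> = (\<lambda>q. \<Sum>p\<in>F. \<omega> p * T (fst p) (snd p) q)"
  unfolding linext_def
  by (rule ext, rule sum.mono_neutral_left) (use assms in \<open>auto simp: supp_def\<close>)

lemma fin_linext: "fin \<omega> \<Longrightarrow> (\<And>\<alpha> \<sigma>. fin (T \<alpha> \<sigma>)) \<Longrightarrow> fin (linext T \<omega>)"
  unfolding linext_def by (rule fin_sum) (rule fin_times, simp)

lemma fin_kappa [simp]: "fin \<omega> \<Longrightarrow> fin (kappa \<omega>)"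
  unfolding kappa_def by (rule fin_linext) auto

lemma fin_ext_d [simp]: "fin \<omega> \<Longrightarrow> fin (ext_d n \<omega>)"
  unfolding ext_d_def by (rule fin_linext) auto

definition linfin :: "(form \<Rightarrow> ('b \<Rightarrow> real)) \<Rightarrow> bool" where
  "linfin F \<longleftrightarrow> (\<forall>c a b. fin a \<longrightarrow> fin b \<longrightarrow> F (fscale c a + b) = fscale c (F a) + F b)"

lemma linfin_linext: "linfin (linext T)"
  unfolding linfin_def
proof (intro allI impI)
  fix c a b assume a: "fin a" and b: "fin b"
  let ?F = "supp a \<union> supp b"
  have fF: "finite ?F" using a b by (simp add: fin_def)
  have s: "supp (fscale c a + b) \<subseteq> ?F" by (auto simp: supp_def fscale_def)
  show "linext T (fscale c a + b) = fscale c (linext T a) + linext T b"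
    unfolding linext_eq[OF fF s] linext_eq[OF fF Un_upper1[of "supp a" "supp b"]]
       linext_eq[OF fF Un_upper2[of "supp b" "supp a"]]
    by (auto simp: fun_eq_iff algebra_simps sum.distrib sum_distrib_left fscale_def)
qed

lemma linext_mono [simp]: "linext T (mono \<alpha> \<sigma>) = T \<alpha> \<sigma>"
  unfolding linext_def supp_mono by (simp add: mono_def)

lemma kappa_mono' [simp]: "kappa (mono \<alpha> \<sigma>) = kappa_mono \<alpha> \<sigma>"
  by (simp add: kappa_def)

lemma ext_d_mono [simp]: "ext_d n (mono \<alpha> \<sigma>) = d_mono n \<alpha> \<sigma>"
  by (simp add: ext_d_def)

lemma linfin_kappa: "linfin kappa"
  unfolding kappa_def by (rule linfin_linext)

lemma linfin_ext_d: "linfin (ext_d n)"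
  unfolding ext_d_def by (rule linfin_linext)

lemma linfin_zero: "linfin F \<Longrightarrow> F 0 = 0"
proof -
  assume "linfin F"
  then have "F (fscale 1 0 + 0) = fscale 1 (F 0) + F 0" unfolding linfin_def using fin_zero by blast
  moreover have "fscale 1 (0::form) + 0 = 0" by (simp add: fscale_def fun_eq_iff)
  ultimately have "F 0 = F 0 + F 0" by (simp add: fscale_def)
  then show "F 0 = 0" by (simp add: fun_eq_iff)
qed

lemma linfinD: "linfin F \<Longrightarrow> fin a \<Longrightarrow> fin b \<Longrightarrow> F (fscale c a + b) = fscale c (F a) + F b"
  unfolding linfin_def by blast

lemma linfin_add: "linfin F \<Longrightarrow> fin a \<Longrightarrow> fin b \<Longrightarrow> F (a + b) = F a + F b"
  using linfinD[of F a b 1] by (simp add: fscale_def)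

lemma linfin_scale: "linfin F \<Longrightarrow> fin a \<Longrightarrow> F (fscale c a) = fscale c (F a)"
  using linfinD[of F a 0 c] linfin_zero[of F] by simp

lemma linfin_comp: "linfin F \<Longrightarrow> linfin G \<Longrightarrow> (\<And>x. fin x \<Longrightarrow> fin (G x)) \<Longrightarrow> linfin (\<lambda>x. F (G x))"
  unfolding linfin_def by (auto intro: fin_scale)

lemma linfin_span:
  assumes F: "linfin F" and S: "\<And>x. x \<in> S \<Longrightarrow> fin x" and x: "x \<in> FV.span S"
  shows "F x \<in> FV.span (F ` S)"
proof -
  have "fin x \<and> F x \<in> FV.span (F ` S)"
    using x
  proof (induction rule: FV.span_induct_alt)
    case base then show ?case using linfin_zero[OF F] FV.span_zero fin_zero by metis
  next
    case (step c x y)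
    have fx: "fin x" using step S by blast
    have "fin (fscale c x + y)" using fx step by (intro fin_add_scale) auto
    moreover have "F (fscale c x + y) = fscale c (F x) + F y" using fx step by (intro linfinD[OF F]) auto
    moreover have "fscale c (F x) + F y \<in> FV.span (F ` S)"
      using step by (meson FV.span_add FV.span_scale FV.span_base imageI)
    moreover have "(\<lambda>a. fscale c x a + y a) = fscale c x + y" by (simp add: plus_fun_def)
    ultimately show ?case by metis
  qed
  then show ?thesis by simp
qed

lemma span_sub: "X \<subseteq> FV.span Y \<Longrightarrow> FV.span X \<subseteq> FV.span Y"
  by (metis FV.span_mono FV.span_span)

lemma img_span_sub:
  assumes F: "linfin F" and S: "\<And>x. x \<in> S \<Longrightarrow> fin x" and FS: "F ` S \<subseteq> FV.span Y"
  shows "F ` FV.span S \<subseteq> FV.span Y"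
  using linfin_span[OF F S] span_sub[OF FS] by blast

definition E :: "nat \<Rightarrow> nat \<Rightarrow> nat \<Rightarrow> nat" where
  "E a b = (\<lambda>i. if i = 0 then a else if i = 1 then b else 0)"

lemma E_0 [simp]: "E a b 0 = a" and E_1 [simp]: "E a b 1 = b" and E_Suc0 [simp]: "E a b (Suc 0) = b"
  by (simp_all add: E_def)

lemma E_ge2: "2 \<le> i \<Longrightarrow> E a b i = 0"
  by (simp add: E_def)

lemma E_eq_iff [simp]: "E a b = E c d \<longleftrightarrow> a = c \<and> b = d"
  by (metis E_0 E_1)

lemma E_upd0 [simp]: "(E a b)(0 := c) = E c b"
  by (auto simp: E_def fun_eq_iff)

lemma E_upd1 [simp]: "(E a b)(1 := c) = E a c"
  by (auto simp: E_def fun_eq_iff)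

lemma E_upd1' [simp]: "(E a b)(Suc 0 := c) = E a c"
  by (auto simp: E_def fun_eq_iff)

lemma E_eta: "(\<forall>i\<ge>2. \<alpha> i = 0) \<Longrightarrow> \<alpha> = E (\<alpha> 0) (\<alpha> 1)"
  by (auto simp: E_def fun_eq_iff)

lemma sum_E: "(\<Sum>i<2. E a b i) = a + b"
  by (simp add: numeral_2_eq_2)

lemma prod_E: "(\<Prod>i<2. (x::nat \<Rightarrow> real) i ^ E a b i) = x 0 ^ a * x 1 ^ b"
  by (simp add: numeral_2_eq_2)

lemma subsets2: "\<sigma> \<subseteq> {..<2::nat} \<Longrightarrow> \<sigma> = {} \<or> \<sigma> = {0} \<or> \<sigma> = {1} \<or> \<sigma> = {0, 1}"
proof -
  assume "\<sigma> \<subseteq> {..<2}"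
  then have "\<sigma> \<in> Pow {0, 1}" by (auto simp: numeral_2_eq_2)
  then show ?thesis by (auto simp: Pow_insert)
qed

lemma ldeg_01 [simp]: "ldeg 2 \<alpha> {0, 1} = 0"
  unfolding ldeg_def by (auto simp: numeral_2_eq_2 less_Suc_eq)

lemma ldeg_01' [simp]: "ldeg 2 \<alpha> {0, Suc 0} = 0"
  using ldeg_01 by simp

lemma ldeg_0: "ldeg 2 \<alpha> {0} = (if \<alpha> 1 = 1 then 1 else 0)"
proof -
  have "{i. i < 2 \<and> i \<notin> {0} \<and> \<alpha> i = 1} = (if \<alpha> 1 = 1 then {1} else {})"
    by (auto simp: numeral_2_eq_2 less_Suc_eq)
  then show ?thesis unfolding ldeg_def by simp
qed

lemma ldeg_1: "ldeg 2 \<alpha> {1} = (if \<alpha> 0 = 1 then 1 else 0)"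
proof -
  have "{i. i < 2 \<and> i \<notin> {1} \<and> \<alpha> i = 1} = (if \<alpha> 0 = 1 then {0} else {})"
    by (auto simp: numeral_2_eq_2 less_Suc_eq) (metis neq0_conv)
  then show ?thesis unfolding ldeg_def by simp
qed

lemma ldeg_1': "ldeg 2 \<alpha> {Suc 0} = (if \<alpha> 0 = 1 then 1 else 0)"
  using ldeg_1 by simp

lemma monosL2_elim:
  assumes "m \<in> monosL 2 j k l"
  obtains a b \<sigma> where "m = mono (E a b) \<sigma>" "a + b = j" "\<sigma> = {} \<or> \<sigma> = {0} \<or> \<sigma> = {1} \<or> \<sigma> = {0, 1}"
    "int (card \<sigma>) = k" "l \<le> ldeg 2 (E a b) \<sigma>"
proof -
  from assms obtain \<alpha> \<sigma> where h: "m = mono \<alpha> \<sigma>" "\<forall>i\<ge>2. \<alpha> i = 0" "(\<Sum>i<2. \<alpha> i) = j"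
    "\<sigma> \<subseteq> {..<2}" "int (card \<sigma>) = k" "ldeg 2 \<alpha> \<sigma> \<ge> l"
    unfolding monosL_def by blast
  have a: "\<alpha> = E (\<alpha> 0) (\<alpha> 1)" using h(2) by (rule E_eta)
  show ?thesis
    apply (rule that[of "\<alpha> 0" "\<alpha> 1" \<sigma>])
    using h subsets2[OF h(4)] a sum_E[of "\<alpha> 0" "\<alpha> 1"] by metis+
qed

lemma monosL2_intro:
  assumes "\<sigma> \<subseteq> {..<2}" "a + b = j" "int (card \<sigma>) = k" "l \<le> ldeg 2 (E a b) \<sigma>"
  shows "mono (E a b) \<sigma> \<in> monosL 2 j k l"
  unfolding monosL_def using assms E_ge2[of _ a b] sum_E[of a b] by blast

lemma psign_empty [simp]: "psign {} j = 1"
  by (simp add: psign_def)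

lemma psign_0 [simp]: "psign {0} 0 = 1"
  by (simp add: psign_def)

lemma psign_1 [simp]: "psign {Suc 0} (Suc 0) = 1"
proof -
  have h: "{i \<in> {Suc 0}. i < Suc 0} = {}" by auto
  show ?thesis unfolding psign_def by (simp only: h card.empty power_0)
qed

lemma psign_01_0 [simp]: "psign {0, Suc 0} 0 = 1"
proof -
  have h: "{i \<in> {0::nat, Suc 0}. i < 0} = {}" by auto
  show ?thesis unfolding psign_def by (simp only: h card.empty power_0)
qed

lemma psign_01_1 [simp]: "psign {0, Suc 0} (Suc 0) = -1"
proof -
  have h: "{i \<in> {0::nat, Suc 0}. i < Suc 0} = {0}" by auto
  show ?thesis unfolding psign_def by (simp only: h) simp
qed

lemma kappa_mono_empty [simp]: "kappa_mono \<alpha> {} = 0"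
  by (simp add: kappa_mono_def fun_eq_iff)

lemma kappa_M0 [simp]: "kappa_mono (E a b) {0} = mono (E (Suc a) b) {}"
  by (simp add: kappa_mono_def fun_eq_iff)

lemma kappa_M1 [simp]: "kappa_mono (E a b) {1} = mono (E a (Suc b)) {}"
  by (simp add: kappa_mono_def fun_eq_iff)

lemma kappa_M01 [simp]: "kappa_mono (E a b) {0, 1} = mono (E (Suc a) b) {1} - mono (E a (Suc b)) {0}"
proof -
  have "{0::nat, 1} - {0} = {1}" "{0::nat, 1} - {1} = {0}" by auto
  then show ?thesis
    by (simp add: kappa_mono_def fun_eq_iff)
qed

lemma kappa_M1' [simp]: "kappa_mono (E a b) {Suc 0} = mono (E a (Suc b)) {}"
  by (simp add: kappa_mono_def fun_eq_iff)

lemma kappa_M01' [simp]: "kappa_mono (E a b) {0, Suc 0} = mono (E (Suc a) b) {Suc 0} - mono (E a (Suc b)) {0}"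
proof -
  have "{0::nat, Suc 0} - {0} = {Suc 0}" "{0::nat, Suc 0} - {Suc 0} = {0}" by auto
  then show ?thesis
    by (simp add: kappa_mono_def fun_eq_iff)
qed

lemma d_M: "d_mono 2 (E a b) {} = fscale (real a) (mono (E (a - 1) b) {0}) + fscale (real b) (mono (E a (b - 1)) {1})"
proof -
  let ?f = "\<lambda>j q. real (E a b j) * psign {} j * mono ((E a b)(j := E a b j - 1)) (insert j {}) q"
  have "(\<Sum>j\<in>{j. j < 2 \<and> j \<notin> {} \<and> 0 < E a b j}. ?f j q) = (\<Sum>j\<in>{0, 1}. ?f j q)" for q
    by (rule sum.mono_neutral_left) (auto simp: numeral_2_eq_2 less_Suc_eq)
  then show ?thesis
    by (simp add: d_mono_def psign_def fun_eq_iff fscale_def)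
qed

lemma fin_monosL: "m \<in> monosL n r k l \<Longrightarrow> fin m"
  unfolding monosL_def by auto

lemma fin_HHl: "x \<in> HHl n r l k \<Longrightarrow> fin x"
  unfolding HHl_def by (erule fin_span) (rule fin_monosL)

lemma fin_HH: "x \<in> HH n r k \<Longrightarrow> fin x"
  unfolding HH_def by (erule fin_span) (rule fin_monosL)

lemma fin_PP: "x \<in> PP n r k \<Longrightarrow> fin x"
  unfolding PP_def by (erule fin_span) (auto intro: fin_HH)

lemma fin_JJ: "x \<in> JJ n r k \<Longrightarrow> fin x"
  unfolding JJ_def by (erule fin_span) (auto intro!: fin_kappa intro: fin_HHl)

lemma fin_SS: "x \<in> SS n r k \<Longrightarrow> fin x"
  unfolding SS_def by (erule fin_span) (auto intro!: fin_ext_d intro: fin_PP fin_JJ)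

lemma PP_sub:
  assumes "\<And>j. j \<le> s \<Longrightarrow> G ` monosL n j k 0 \<subseteq> FV.span Y" "linfin G"
  shows "G ` PP n s k \<subseteq> FV.span Y"
  unfolding PP_def
proof (rule img_span_sub[OF assms(2)])
  show "fin x" if "x \<in> (\<Union>j\<in>{..s}. HH n j k)" for x using that by (auto intro: fin_HH)
  show "G ` (\<Union>j\<in>{..s}. HH n j k) \<subseteq> FV.span Y"
    unfolding HH_def image_UN
  proof (intro UN_least)
    fix j assume "j \<in> {..s}"
    then show "G ` FV.span (monosL n j k 0) \<subseteq> FV.span Y"
      by (intro img_span_sub[OF assms(2)] assms(1)) (auto intro: fin_monosL)
  qed
qed

lemma JJ_sub:
  assumes "\<And>l. 1 \<le> l \<Longrightarrow> (\<lambda>m. G (kappa m)) ` monosL n (s + l - 1) (k + 1) l \<subseteq> FV.span Y" "linfin G"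
  shows "G ` JJ n s k \<subseteq> FV.span Y"
  unfolding JJ_def
proof (rule img_span_sub[OF assms(2)])
  show "fin x" if "x \<in> (\<Union>l\<in>{l. 1 \<le> l}. kappa ` HHl n (s + l - 1) l (k + 1))" for x
    using that by (auto intro!: fin_kappa intro: fin_HHl)
  have "(\<lambda>m. G (kappa m)) ` HHl n (s + l - 1) l (k + 1) \<subseteq> FV.span Y" if "1 \<le> l" for l
    unfolding HHl_def
    by (rule img_span_sub[OF linfin_comp[OF assms(2) linfin_kappa fin_kappa]])
       (use assms(1)[OF that] in \<open>auto intro: fin_monosL\<close>)
  then show "G ` (\<Union>l\<in>{l. 1 \<le> l}. kappa ` HHl n (s + l - 1) l (k + 1)) \<subseteq> FV.span Y"
    by (auto simp: image_image image_subset_iff)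
qed

lemma SS_sub:
  assumes A1: "\<And>j. j \<le> s \<Longrightarrow> G ` monosL n j k 0 \<subseteq> FV.span Y"
    and A2: "\<And>l. 1 \<le> l \<Longrightarrow> (\<lambda>m. G (kappa m)) ` monosL n (s + l - 1) (k + 1) l \<subseteq> FV.span Y"
    and A3: "\<And>l. 1 \<le> l \<Longrightarrow> (\<lambda>m. G (ext_d n (kappa m))) ` monosL n (s + l) k l \<subseteq> FV.span Y"
    and G: "linfin G"
  shows "G ` SS n s k \<subseteq> FV.span Y"
  unfolding SS_def
proof (rule img_span_sub[OF G])
  show "fin x" if "x \<in> PP n s k \<union> JJ n s k \<union> ext_d n ` JJ n (s + 1) (k - 1)" for x
    using that by (auto intro!: fin_ext_d intro: fin_PP fin_JJ)
  have 1: "G ` PP n s k \<subseteq> FV.span Y" by (rule PP_sub[OF A1 G])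
  have 2: "G ` JJ n s k \<subseteq> FV.span Y" by (rule JJ_sub[OF A2 G])
  have 3: "(\<lambda>x. G (ext_d n x)) ` JJ n (s + 1) (k - 1) \<subseteq> FV.span Y"
    by (rule JJ_sub[OF _ linfin_comp[OF G linfin_ext_d fin_ext_d]]) (use A3 in auto)
  show "G ` (PP n s k \<union> JJ n s k \<union> ext_d n ` JJ n (s + 1) (k - 1)) \<subseteq> FV.span Y"
    using 1 2 3 by (auto simp: image_Un image_image)
qed

lemma linfin_id: "linfin (\<lambda>x. x)"
  by (simp add: linfin_def)

lemma SSminus_sub:
  assumes A1: "\<And>j. j \<le> s \<Longrightarrow> monosL n j k 0 \<subseteq> FV.span Y"
    and A2: "\<And>l. 1 \<le> l \<Longrightarrow> kappa ` monosL n (s + l - 1) (k + 1) l \<subseteq> FV.span Y"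
    and A3: "\<And>l. 1 \<le> l \<Longrightarrow> (\<lambda>m. ext_d n (kappa m)) ` monosL n (s + l) k l \<subseteq> FV.span Y"
    and B1: "\<And>j. j \<le> s \<Longrightarrow> kappa ` monosL n j (k + 1) 0 \<subseteq> FV.span Y"
    and B2: "\<And>l. 1 \<le> l \<Longrightarrow> (\<lambda>m. kappa (kappa m)) ` monosL n (s + l - 1) (k + 2) l \<subseteq> FV.span Y"
    and B3: "\<And>l. 1 \<le> l \<Longrightarrow> (\<lambda>m. kappa (ext_d n (kappa m))) ` monosL n (s + l) (k + 1) l \<subseteq> FV.span Y"
  shows "SSminus n (Suc s) k \<subseteq> FV.span Y"
  unfolding SSminus_def
proof (rule span_sub)
  have 1: "(\<lambda>x. x) ` SS n s k \<subseteq> FV.span Y"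
    by (rule SS_sub[OF _ _ _ linfin_id]) (use A1 A2 A3 in auto)
  have 2: "kappa ` SS n s (k + 1) \<subseteq> FV.span Y"
    by (rule SS_sub[OF _ _ _ linfin_kappa]) (use B1 B2 B3 in \<open>auto simp: add.assoc\<close>)
  show "SS n (Suc s - 1) k \<union> kappa ` SS n (Suc s - 1) (k + 1) \<subseteq> FV.span Y"
    using 1 2 by auto
qed

lemma G1: "j \<le> s \<Longrightarrow> m \<in> monosL n j k 0 \<Longrightarrow> m \<in> SSminus n (Suc s) k"
  unfolding SSminus_def SS_def PP_def HH_def
  by (rule FV.span_base, rule UnI1, rule FV.span_base, rule UnI1, rule UnI1, rule FV.span_base,
      rule UN_I[of j], simp, rule FV.span_base)

lemma G4: "j \<le> s \<Longrightarrow> m \<in> monosL n j (k + 1) 0 \<Longrightarrow> kappa m \<in> SSminus n (Suc s) k"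
  unfolding SSminus_def SS_def PP_def HH_def
  by (rule FV.span_base, rule UnI2, rule imageI, rule FV.span_base, rule UnI1, rule UnI1, rule FV.span_base,
      rule UN_I[of j], simp, rule FV.span_base)

lemma G3: "1 \<le> l \<Longrightarrow> m \<in> monosL n (s + l) k l \<Longrightarrow> ext_d n (kappa m) \<in> SSminus n (Suc s) k"
  unfolding SSminus_def SS_def JJ_def HHl_def
  by (rule FV.span_base, rule UnI1, rule FV.span_base, rule UnI2, rule imageI, rule FV.span_base,
      rule UN_I[of l], simp, rule imageI, rule FV.span_base, simp)

lemma G6: "1 \<le> l \<Longrightarrow> m \<in> monosL n (s + l) (k + 1) l \<Longrightarrow> kappa (ext_d n (kappa m)) \<in> SSminus n (Suc s) k"
  unfolding SSminus_def SS_def JJ_def HHl_def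
  by (rule FV.span_base, rule UnI2, rule imageI, rule FV.span_base, rule UnI2, rule imageI, rule FV.span_base,
      rule UN_I[of l], simp, rule imageI, rule FV.span_base, simp)

section \<open>Restriction to the cube\<close>

definition poly2 :: "form \<Rightarrow> bool" where
  "poly2 \<omega> \<longleftrightarrow> (\<forall>p\<in>supp \<omega>. \<forall>i\<ge>2. fst p i = 0)"

lemma poly2_zero [simp]: "poly2 0"
  by (simp add: poly2_def supp_def)

lemma poly2_add_scale: "poly2 a \<Longrightarrow> poly2 b \<Longrightarrow> poly2 (fscale c a + b)"
  unfolding poly2_def supp_def by (auto simp: fscale_def) (metis add.left_neutral mult_zero_right)

lemma poly2_mono [simp]: "poly2 (mono (E a b) \<sigma>)"
  unfolding poly2_def supp_mono by (auto simp: E_ge2)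

lemma poly2_span: "x \<in> FV.span S \<Longrightarrow> (\<And>x. x \<in> S \<Longrightarrow> poly2 x) \<Longrightarrow> poly2 x"
  by (induction rule: FV.span_induct_alt) (auto intro: poly2_add_scale)

lemma fun_sum_apply: "(\<Sum>v\<in>t. f v) p = (\<Sum>v\<in>t. f v p)"
  by (induction t rule: infinite_finite_induct) auto

lemma eval_form_eq:
  assumes "finite F" "{\<alpha>. \<omega> (\<alpha>, \<sigma>) \<noteq> 0} \<subseteq> F"
  shows "eval_form n \<omega> x \<sigma> = (\<Sum>\<alpha>\<in>F. \<omega> (\<alpha>, \<sigma>) * (\<Prod>i<n. x i ^ \<alpha> i))"
  unfolding eval_form_def by (rule sum.mono_neutral_left) (use assms in auto)

lemma linfin_restrict: "linfin (restrict_cube n)"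
  unfolding linfin_def
proof (intro allI impI)
  fix c a b assume a: "fin a" and b: "fin b"
  let ?F = "fst ` (supp a \<union> supp b)"
  have fF: "finite ?F" using a b by (simp add: fin_def)
  have sa: "{\<alpha>. a (\<alpha>, \<sigma>) \<noteq> 0} \<subseteq> ?F" for \<sigma> by (force simp: supp_def)
  have sb: "{\<alpha>. b (\<alpha>, \<sigma>) \<noteq> 0} \<subseteq> ?F" for \<sigma> by (force simp: supp_def)
  have sab: "{\<alpha>. (fscale c a + b) (\<alpha>, \<sigma>) \<noteq> 0} \<subseteq> ?F" for \<sigma>
  proof
    fix \<alpha> assume "\<alpha> \<in> {\<alpha>. (fscale c a + b) (\<alpha>, \<sigma>) \<noteq> 0}"
    then have "(\<alpha>, \<sigma>) \<in> supp a \<union> supp b" by (auto simp: supp_def fscale_def)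
    then show "\<alpha> \<in> ?F" by force
  qed
  have ev: "eval_form n (fscale c a + b) x \<sigma> = c * eval_form n a x \<sigma> + eval_form n b x \<sigma>" for x \<sigma>
    by (simp only: eval_form_eq[OF fF sab] eval_form_eq[OF fF sa] eval_form_eq[OF fF sb])
       (simp add: fscale_def sum.distrib sum_distrib_left algebra_simps)
  show "restrict_cube n (fscale c a + b) = fscale c (restrict_cube n a) + restrict_cube n b"
    unfolding restrict_cube_def by (auto simp: fun_eq_iff ev fscale_apply)
qed

lemma poly_zero_Icc:
  assumes "\<And>x::real. -1 \<le> x \<Longrightarrow> x \<le> 1 \<Longrightarrow> (\<Sum>i\<le>N. c i * x ^ i) = 0" "i \<le> N"
  shows "c i = 0"
proof (rule ccontr)
  assume "c i \<noteq> 0"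
  then have "finite {z. (\<Sum>i\<le>N. c i * z ^ i) = 0}"
    using assms(2) by (intro polyfun_rootbound_finite) blast
  moreover have "{-1..1} \<subseteq> {z. (\<Sum>i\<le>N. c i * z ^ i) = 0}" using assms(1) by auto
  ultimately have "finite {-1..(1::real)}" by (rule finite_subset[rotated])
  then show False using infinite_Icc[of "-1::real" 1] by simp
qed

lemma restrict_zero:
  assumes fin: "fin \<omega>" and p2: "poly2 \<omega>" and z: "restrict_cube 2 \<omega> = 0"
  shows "\<omega> = 0"
proof (rule ext, rule ccontr)
  fix p assume "\<omega> p \<noteq> 0 p"
  obtain \<alpha>0 \<sigma>0 where p: "p = (\<alpha>0, \<sigma>0)" by (cases p)
  have ne: "\<omega> (\<alpha>0, \<sigma>0) \<noteq> 0" using \<open>\<omega> p \<noteq> 0 p\<close> p by simp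
  define A where "A = {\<alpha>. \<omega> (\<alpha>, \<sigma>0) \<noteq> 0}"
  have fA: "finite A"
    by (rule finite_subset[of _ "fst ` supp \<omega>"]) (use fin in \<open>force simp: A_def supp_def fin_def\<close>)+
  have Aeta: "\<alpha> = E (\<alpha> 0) (\<alpha> 1)" if "\<alpha> \<in> A" for \<alpha>
    using p2 that by (intro E_eta) (auto simp: poly2_def A_def supp_def)
  define N where "N = (\<Sum>\<alpha>\<in>A. \<alpha> 0 + \<alpha> 1)"
  have bnd: "\<alpha> 0 \<le> N \<and> \<alpha> 1 \<le> N" if "\<alpha> \<in> A" for \<alpha>
    using member_le_sum[OF that, of "\<lambda>\<alpha>. \<alpha> 0 + \<alpha> 1", OF _ fA] by (simp add: N_def)
  define c where "c a b = \<omega> (E a b, \<sigma>0)" for a b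
  have key: "(\<Sum>a\<le>N. (\<Sum>b\<le>N. c a b * y ^ b) * x ^ a) = 0"
    if x: "-1 \<le> x" "x \<le> 1" and y: "-1 \<le> y" "y \<le> 1" for x y :: real
  proof -
    define pt where "pt = (\<lambda>i::nat. if i = 0 then x else if i = 1 then y else 0)"
    have cube: "pt \<in> cube 2" using x y by (auto simp: cube_def pt_def)
    have "restrict_cube 2 \<omega> (pt, \<sigma>0) = 0" using z by simp
    then have e0: "eval_form 2 \<omega> pt \<sigma>0 = 0" using cube by (simp add: restrict_cube_def)
    define h where "h \<alpha> = \<omega> (\<alpha>, \<sigma>0) * (x ^ \<alpha> 0 * y ^ \<alpha> 1)" for \<alpha>
    have "eval_form 2 \<omega> pt \<sigma>0 = (\<Sum>\<alpha>\<in>A. h \<alpha>)"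
      unfolding eval_form_def A_def h_def by (simp add: pt_def numeral_2_eq_2)
    also have "\<dots> = (\<Sum>\<alpha>\<in>(\<lambda>(a, b). E a b) ` ({..N} \<times> {..N}). h \<alpha>)"
    proof (rule sum.mono_neutral_left)
      show "A \<subseteq> (\<lambda>(a, b). E a b) ` ({..N} \<times> {..N})"
      proof
        fix \<alpha> assume "\<alpha> \<in> A"
        then show "\<alpha> \<in> (\<lambda>(a, b). E a b) ` ({..N} \<times> {..N})"
          using Aeta bnd by (intro image_eqI[of _ _ "(\<alpha> 0, \<alpha> 1)"]) auto
      qed
      show "\<forall>i\<in>(\<lambda>(a, b). E a b) ` ({..N} \<times> {..N}) - A. h i = 0" by (auto simp: h_def A_def)
    qed auto
    also have "\<dots> = (\<Sum>(a, b)\<in>{..N} \<times> {..N}. h (E a b))"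
      by (subst sum.reindex) (auto simp: inj_on_def case_prod_beta)
    also have "\<dots> = (\<Sum>a\<le>N. \<Sum>b\<le>N. h (E a b))"
      by (rule sum.cartesian_product[symmetric])
    also have "\<dots> = (\<Sum>a\<le>N. (\<Sum>b\<le>N. c a b * y ^ b) * x ^ a)"
      by (simp add: h_def c_def sum_distrib_left sum_distrib_right mult_ac)
    finally show ?thesis using e0 by simp
  qed
  have c0: "c a b = 0" if "a \<le> N" "b \<le> N" for a b
  proof -
    have "(\<Sum>b\<le>N. c a b * y ^ b) = 0" if "-1 \<le> y" "y \<le> 1" for y :: real
      using poly_zero_Icc[of "\<lambda>a. (\<Sum>b\<le>N. c a b * y ^ b)" N a] key[OF _ _ that] \<open>a \<le> N\<close> by blast
    then show ?thesis using poly_zero_Icc[of "c a" N b] \<open>b \<le> N\<close> by blast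
  qed
  have "\<alpha>0 \<in> A" using ne by (simp add: A_def)
  then have "c (\<alpha>0 0) (\<alpha>0 1) = \<omega> (\<alpha>0, \<sigma>0)" using Aeta by (simp add: c_def)
  then show False using c0 bnd[OF \<open>\<alpha>0 \<in> A\<close>] ne by simp
qed

lemma linfin_sum:
  assumes F: "linfin F" and t: "finite t" "t \<subseteq> FV.span B" and B: "\<And>x. x \<in> B \<Longrightarrow> fin x"
  shows "F (\<Sum>w\<in>t. fscale (g w) w) = (\<Sum>w\<in>t. fscale (g w) (F w))"
  using t
proof (induction t rule: finite_induct)
  case empty then show ?case using linfin_zero[OF F] by (simp only: sum.empty)
next
  case (insert x t)
  have fx: "fin x" using insert B by (auto intro: fin_span)
  have "(\<Sum>w\<in>t. fscale (g w) w) \<in> FV.span B"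
    using insert by (intro FV.span_sum FV.span_scale) auto
  then have fs: "fin (\<Sum>w\<in>t. fscale (g w) w)" using B by (auto intro: fin_span)
  have IH: "F (\<Sum>w\<in>t. fscale (g w) w) = (\<Sum>w\<in>t. fscale (g w) (F w))" using insert by blast
  show ?case using insert by (simp only: sum.insert[OF insert(1,2)] linfinD[OF F fx fs] IH)
qed

lemma dim_restrict:
  assumes fB: "finite B" and iB: "FV.independent B" and finB: "\<And>x. x \<in> B \<Longrightarrow> fin x"
    and pB: "\<And>x. x \<in> B \<Longrightarrow> poly2 x"
  shows "fdim (restrict_cube 2 ` FV.span B) = card B"
proof -
  let ?R = "restrict_cube 2"
  have R: "linfin ?R" by (rule linfin_restrict)
  have finS: "fin x" if "x \<in> FV.span B" for x using that finB by (rule fin_span)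
  have polyS: "poly2 x" if "x \<in> FV.span B" for x using that pB by (rule poly2_span)
  have eq: "?R ` FV.span B = FV.span (?R ` B)"
  proof
    show "?R ` FV.span B \<subseteq> FV.span (?R ` B)" using linfin_span[OF R finB] by blast
    show "FV.span (?R ` B) \<subseteq> ?R ` FV.span B"
    proof
      fix x assume "x \<in> FV.span (?R ` B)"
      then show "x \<in> ?R ` FV.span B"
      proof (induction rule: FV.span_induct_alt)
        case base then show ?case using linfin_zero[OF R] FV.span_zero by (metis imageI)
      next
        case (step c x y)
        then obtain b w where b: "b \<in> B" "x = ?R b" and w: "w \<in> FV.span B" "y = ?R w" by auto
        have "fscale c x + y = ?R (fscale c b + w)"
          using b w finB finS by (simp add: linfinD[OF R])
        moreover have "fscale c b + w \<in> FV.span B"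
          using b w by (meson FV.span_add FV.span_scale FV.span_base)
        ultimately show ?case by blast
      qed
    qed
  qed
  have inj: "inj_on ?R B"
  proof (rule inj_onI)
    fix e f assume ef: "e \<in> B" "f \<in> B" "?R e = ?R f"
    have "?R (fscale (-1) f + e) = fscale (-1) (?R f) + ?R e"
      using ef finB by (intro linfinD[OF R]) auto
    also have "\<dots> = 0" using ef by (simp add: fun_eq_iff fscale_def)
    finally have "fscale (-1) f + e = 0"
      using ef finB pB by (intro restrict_zero fin_add_scale poly2_add_scale) auto
    then show "e = f" by (simp add: fun_eq_iff fscale_def)
  qed
  have indep: "FV.independent (?R ` B)"
    unfolding FV.independent_explicit_module
  proof (intro allI impI)
    fix t u v assume t: "finite t" "t \<subseteq> ?R ` B" "(\<Sum>v\<in>t. fscale (u v) v) = 0" "v \<in> t"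
    define t' where "t' = B \<inter> ?R -` t"
    have t'B: "t' \<subseteq> B" and imt: "?R ` t' = t" using t(2) by (auto simp: t'_def)
    have injt: "inj_on ?R t'" using inj t'B by (rule inj_on_subset)
    have ft': "finite t'" using fB t'B by (rule finite_subset[rotated])
    have "(\<Sum>v\<in>t. fscale (u v) v) = (\<Sum>w\<in>t'. fscale (u (?R w)) (?R w))"
      unfolding imt[symmetric] by (rule sum.reindex[OF injt, unfolded comp_def])
    also have "\<dots> = ?R (\<Sum>w\<in>t'. fscale (u (?R w)) w)"
      by (rule linfin_sum[OF R ft', symmetric]) (use t'B finB in \<open>auto intro: FV.span_base\<close>)
    finally have z: "?R (\<Sum>w\<in>t'. fscale (u (?R w)) w) = 0" using t(3) by simp
    have mem: "(\<Sum>w\<in>t'. fscale (u (?R w)) w) \<in> FV.span B"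
      using t'B by (intro FV.span_sum FV.span_scale FV.span_base) auto
    have "(\<Sum>w\<in>t'. fscale (u (?R w)) w) = 0"
      by (rule restrict_zero[OF finS[OF mem] polyS[OF mem] z])
    then have u0: "u (?R w) = 0" if "w \<in> t'" for w
      using FV.independentD[OF iB ft' t'B _ that, of "\<lambda>w. u (?R w)"] by blast
    obtain w where "w \<in> t'" "v = ?R w" using t(4) imt by auto
    then show "u v = 0" using u0 by simp
  qed
  have "fdim (?R ` FV.span B) = fdim (?R ` B)" unfolding eq by (rule FV.dim_span)
  also have "\<dots> = card (?R ` B)" by (rule FV.dim_eq_card_independent[OF indep])
  also have "\<dots> = card B" by (rule card_image[OF inj])
  finally show ?thesis .
qed

lemma indep_private:
  assumes "\<And>e. e \<in> B \<Longrightarrow> \<exists>p. e p \<noteq> 0 \<and> (\<forall>f\<in>B. f \<noteq> e \<longrightarrow> f p = 0)"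
  shows "FV.independent (B :: form set)"
  unfolding FV.independent_explicit_module
proof (intro allI impI)
  fix t u v assume t: "finite t" "t \<subseteq> B" "(\<Sum>v\<in>t. fscale (u v) v) = 0" "v \<in> t"
  obtain p where p: "v p \<noteq> 0" "\<forall>f\<in>B. f \<noteq> v \<longrightarrow> f p = 0" using assms t by blast
  have "0 = (\<Sum>w\<in>t. fscale (u w) w) p" using t(3) by simp
  also have "\<dots> = (\<Sum>w\<in>t. u w * w p)" by (simp add: fun_sum_apply fscale_def)
  also have "\<dots> = u v * v p + (\<Sum>w\<in>t - {v}. u w * w p)" by (rule sum.remove[OF t(1) t(4)])
  also have "(\<Sum>w\<in>t - {v}. u w * w p) = 0"
    by (rule sum.neutral) (use p t in auto)
  finally show "u v = 0" using p by simp
qed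

lemma monosL2_cases:
  assumes "m \<in> monosL 2 j k l"
  shows "(k = 0 \<and> (\<exists>a b. a + b = j \<and> m = mono (E a b) {})) \<or>
    (k = 1 \<and> (\<exists>a b. a + b = j \<and> m = mono (E a b) {0} \<and> l \<le> (if b = 1 then 1 else 0))) \<or>
    (k = 1 \<and> (\<exists>a b. a + b = j \<and> m = mono (E a b) {1} \<and> l \<le> (if a = 1 then 1 else 0))) \<or>
    (k = 2 \<and> l = 0 \<and> (\<exists>a b. a + b = j \<and> m = mono (E a b) {0, 1}))"
proof -
  obtain a b \<sigma> where h1: "m = mono (E a b) \<sigma>" and h2: "a + b = j"
    and h3: "\<sigma> = {} \<or> \<sigma> = {0} \<or> \<sigma> = {1} \<or> \<sigma> = {0, 1}"
    and h4: "int (card \<sigma>) = k" and h5: "l \<le> ldeg 2 (E a b) \<sigma>"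
    by (rule monosL2_elim[OF assms])
  from h3 show ?thesis
  proof (elim disjE)
    assume s: "\<sigma> = {}"
    have k: "k = 0" using h4 unfolding s by simp
    have "k = 0 \<and> (\<exists>a b. a + b = j \<and> m = mono (E a b) {})" using k h1 h2 unfolding s by blast
    then show ?thesis by (rule disjI1)
  next
    assume s: "\<sigma> = {0}"
    have k: "k = 1" using h4 unfolding s by simp
    have l: "l \<le> (if b = 1 then 1 else 0)" using h5 unfolding s ldeg_0 by simp
    have "k = 1 \<and> (\<exists>a b. a + b = j \<and> m = mono (E a b) {0} \<and> l \<le> (if b = 1 then 1 else 0))"
      using k l h1 h2 unfolding s by blast
    then show ?thesis by (intro disjI2 disjI1)
  next
    assume s: "\<sigma> = {1}"
    have k: "k = 1" using h4 unfolding s by simp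
    have l: "l \<le> (if a = 1 then 1 else 0)" using h5 unfolding s ldeg_1 by simp
    have "k = 1 \<and> (\<exists>a b. a + b = j \<and> m = mono (E a b) {1} \<and> l \<le> (if a = 1 then 1 else 0))"
      using k l h1 h2 unfolding s by blast
    then show ?thesis by (intro disjI2 disjI1)
  next
    assume s: "\<sigma> = {0, 1}"
    have k: "k = 2" using h4 unfolding s by simp
    have l: "l = 0" using h5 unfolding s ldeg_01 by simp
    have "k = 2 \<and> l = 0 \<and> (\<exists>a b. a + b = j \<and> m = mono (E a b) {0, 1})"
      using k l h1 h2 unfolding s by blast
    then show ?thesis by (intro disjI2)
  qed
qed

definition T :: "nat \<Rightarrow> (nat \<times> nat) set" where "T s = {(a, b). a + b \<le> s}"

lemma T_Suc: "T (Suc s) = T s \<union> (\<lambda>a. (a, Suc s - a)) ` {..Suc s}"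
proof
  show "T (Suc s) \<subseteq> T s \<union> (\<lambda>a. (a, Suc s - a)) ` {..Suc s}"
  proof
    fix p assume "p \<in> T (Suc s)"
    then obtain a b where p: "p = (a, b)" "a + b \<le> Suc s" by (auto simp: T_def)
    show "p \<in> T s \<union> (\<lambda>a. (a, Suc s - a)) ` {..Suc s}"
    proof (cases "a + b \<le> s")
      case True then show ?thesis using p by (simp add: T_def)
    next
      case False
      then have "b = Suc s - a" "a \<le> Suc s" using p by auto
      then show ?thesis using p by blast
    qed
  qed
  show "T s \<union> (\<lambda>a. (a, Suc s - a)) ` {..Suc s} \<subseteq> T (Suc s)" by (auto simp: T_def)
qed

lemma card_T: "2 * card (T s) = (s + 1) * (s + 2)"
proof (induction s)
  case 0
  have "T 0 = {(0, 0)}" by (auto simp: T_def)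
  then show ?case by simp
next
  case (Suc s)
  have d: "T s \<inter> (\<lambda>a. (a, Suc s - a)) ` {..Suc s} = {}" by (auto simp: T_def)
  have fin: "finite (T s)"
    by (rule finite_subset[of _ "{..s} \<times> {..s}"]) (auto simp: T_def)
  have c: "card ((\<lambda>a. (a, Suc s - a)) ` {..Suc s}) = Suc (Suc s)"
    by (subst card_image) (auto simp: inj_on_def)
  show ?case unfolding T_Suc using Suc d fin c by (simp add: card_Un_disjoint)
qed

lemma finite_T: "finite (T s)"
  by (rule finite_subset[of _ "{..s} \<times> {..s}"]) (auto simp: T_def)

definition Mset :: "nat set \<Rightarrow> nat \<Rightarrow> form set" where
  "Mset \<sigma> s = (\<lambda>(a, b). mono (E a b) \<sigma>) ` T s"

lemma mono_eq_iff [simp]: "mono \<alpha> \<sigma> = mono \<beta> \<tau> \<longleftrightarrow> \<alpha> = \<beta> \<and> \<sigma> = \<tau>"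
proof
  assume "mono \<alpha> \<sigma> = mono \<beta> \<tau>"
  then have "mono \<alpha> \<sigma> (\<alpha>, \<sigma>) = mono \<beta> \<tau> (\<alpha>, \<sigma>)" by simp
  then show "\<alpha> = \<beta> \<and> \<sigma> = \<tau>" by (simp add: mono_def split: if_splits)
qed simp

lemma card_Mset: "card (Mset \<sigma> s) = card (T s)"
  unfolding Mset_def by (rule card_image) (auto simp: inj_on_def)

lemma finite_Mset: "finite (Mset \<sigma> s)"
  unfolding Mset_def using finite_T by simp

lemma Mset_iff: "m \<in> Mset \<sigma> s \<longleftrightarrow> (\<exists>a b. a + b \<le> s \<and> m = mono (E a b) \<sigma>)"
  unfolding Mset_def T_def by auto

lemma mono_apply: "mono \<alpha> \<sigma> p = (if p = (\<alpha>, \<sigma>) then 1 else 0)"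
  by (simp add: mono_def)

lemma indep_monos: "(\<And>e. e \<in> B \<Longrightarrow> \<exists>\<alpha> \<sigma>. e = mono \<alpha> \<sigma>) \<Longrightarrow> FV.independent B"
proof (rule indep_private)
  fix e assume h: "\<And>e. e \<in> B \<Longrightarrow> \<exists>\<alpha> \<sigma>. e = mono \<alpha> \<sigma>" and e: "e \<in> B"
  obtain \<alpha> \<sigma> where a: "e = mono \<alpha> \<sigma>" using h[OF e] by blast
  have "\<forall>f\<in>B. f \<noteq> e \<longrightarrow> f (\<alpha>, \<sigma>) = 0"
  proof (intro ballI impI)
    fix f
    assume fB: "f \<in> B" and fe: "f \<noteq> e"
    obtain \<beta> \<tau> where fb: "f = mono \<beta> \<tau>" using h[OF fB] by blast
    have "(\<alpha>, \<sigma>) \<noteq> (\<beta>, \<tau>)" using fe fb a by auto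
    then show "f (\<alpha>, \<sigma>) = 0" unfolding fb mono_apply by simp
  qed
  moreover have "e (\<alpha>, \<sigma>) \<noteq> 0" unfolding a mono_apply by simp
  ultimately show "\<exists>p. e p \<noteq> 0 \<and> (\<forall>f\<in>B. f \<noteq> e \<longrightarrow> f p = 0)" by blast
qed

lemma Mset_fin: "x \<in> Mset \<sigma> s \<Longrightarrow> fin x"
  unfolding Mset_iff by auto

lemma Mset_poly2: "x \<in> Mset \<sigma> s \<Longrightarrow> poly2 x"
  unfolding Mset_iff by auto

lemma Mset_indep: "FV.independent (Mset \<sigma> s)"
  by (rule indep_monos) (unfold Mset_iff, blast)

lemma monosL2_k: "m \<in> monosL 2 j k l \<Longrightarrow> k = 0 \<or> k = 1 \<or> k = 2"
  using monosL2_cases[of m j k l] by blast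

lemma monosL2_k3: "3 \<le> k \<Longrightarrow> monosL 2 j k l = {}"
proof -
  assume k: "3 \<le> k"
  { fix m assume "m \<in> monosL 2 j k l"
    from monosL2_k[OF this] k have False by linarith }
  then show ?thesis by blast
qed

lemma monosL2_2: "m \<in> monosL 2 j 2 l \<Longrightarrow> l = 0 \<and> (\<exists>a b. a + b = j \<and> m = mono (E a b) {0, 1})"
  using monosL2_cases[of m j 2 l] by simp

lemma monosL2_2l: "1 \<le> l \<Longrightarrow> monosL 2 j 2 l = {}"
  using monosL2_2 by fastforce

section \<open>Case k = 2\<close>

lemma SSm2: "SSminus 2 (Suc s) 2 = FV.span (Mset {0, 1} s)"
proof
  show "SSminus 2 (Suc s) 2 \<subseteq> FV.span (Mset {0, 1} s)"
  proof (rule SSminus_sub)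
    fix j assume j: "j \<le> s"
    show "monosL 2 j 2 0 \<subseteq> FV.span (Mset {0, 1} s)"
    proof
      fix m assume "m \<in> monosL 2 j 2 0"
      then obtain a b where "a + b = j" "m = mono (E a b) {0, 1}" using monosL2_2 by blast
      then show "m \<in> FV.span (Mset {0, 1} s)" using j by (intro FV.span_base) (auto simp: Mset_iff)
    qed
  next
    fix l :: nat assume "1 \<le> l"
    show "kappa ` monosL 2 (s + l - 1) (2 + 1) l \<subseteq> FV.span (Mset {0, 1} s)"
      using monosL2_k3[of "2 + 1"] by simp
  next
    fix l :: nat assume "1 \<le> l"
    then show "(\<lambda>m. ext_d 2 (kappa m)) ` monosL 2 (s + l) 2 l \<subseteq> FV.span (Mset {0, 1} s)"
      using monosL2_2l by simp
  next
    fix j assume "j \<le> s"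
    show "kappa ` monosL 2 j (2 + 1) 0 \<subseteq> FV.span (Mset {0, 1} s)"
      using monosL2_k3[of "2 + 1"] by simp
  next
    fix l :: nat assume "1 \<le> l"
    show "(\<lambda>m. kappa (kappa m)) ` monosL 2 (s + l - 1) (2 + 2) l \<subseteq> FV.span (Mset {0, 1} s)"
      using monosL2_k3[of "2 + 2"] by simp
  next
    fix l :: nat assume "1 \<le> l"
    show "(\<lambda>m. kappa (ext_d 2 (kappa m))) ` monosL 2 (s + l) (2 + 1) l \<subseteq> FV.span (Mset {0, 1} s)"
      using monosL2_k3[of "2 + 1"] by simp
  qed
next
  show "FV.span (Mset {0, 1} s) \<subseteq> SSminus 2 (Suc s) 2"
  proof (rule FV.span_minimal)
    show "FV.subspace (SSminus 2 (Suc s) 2)" unfolding SSminus_def by simp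
    show "Mset {0, 1} s \<subseteq> SSminus 2 (Suc s) 2"
    proof
      fix m assume "m \<in> Mset {0, 1} s"
      then obtain a b where ab: "a + b \<le> s" "m = mono (E a b) {0, 1}" unfolding Mset_iff by blast
      have "mono (E a b) {0, 1} \<in> monosL 2 (a + b) 2 0" by (rule monosL2_intro) auto
      then show "m \<in> SSminus 2 (Suc s) 2" using ab by (intro G1[of "a + b"]) auto
    qed
  qed
qed

lemma dof2: "dof (int (Suc s)) 2 2 = int (card (T s))"
proof -
  have m: "min 2 (int (Suc s) div 2 + 2) = 2" by simp
  have "dof (int (Suc s)) 2 2 = bin (int s + 2) (int s)"
    unfolding dof_def m by (simp add: bin_def add.commute)
  also have "\<dots> = int ((s + 2) choose 2)"
    by (simp add: bin_def nat_add_distrib binomial_symmetric[of 2 "s + 2", simplified])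
  finally show ?thesis using card_T[of s] by (simp add: choose_two)
qed

section \<open>Case k = 0\<close>

lemma monosL2_0: "m \<in> monosL 2 j 0 l \<Longrightarrow> \<exists>a b. a + b = j \<and> m = mono (E a b) {}"
proof -
  assume "m \<in> monosL 2 j 0 l"
  from monosL2_cases[OF this] show ?thesis
    apply (elim disjE)
       apply blast
      apply simp
     apply simp
    apply simp
    done
qed

lemma monosL2_1: "m \<in> monosL 2 j 1 l \<Longrightarrow> \<exists>a b. a + b = j \<and>
   ((m = mono (E a b) {0} \<and> l \<le> (if b = 1 then 1 else 0)) \<or> (m = mono (E a b) {1} \<and> l \<le> (if a = 1 then 1 else 0)))"
proof -
  assume "m \<in> monosL 2 j 1 l"
  from monosL2_cases[OF this] show ?thesis
    apply (elim disjE)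
       apply simp
      apply blast
     apply blast
    apply simp
    done
qed

lemma kappa_d_0: "kappa (ext_d 2 (mono (E a b) {})) = fscale (real (a + b)) (mono (E a b) {})"
proof -
  have "kappa (ext_d 2 (mono (E a b) {})) =
     fscale (real a) (kappa (mono (E (a - 1) b) {0})) + fscale (real b) (kappa (mono (E a (b - 1)) {1}))"
    by (simp only: ext_d_mono d_M linfin_add[OF linfin_kappa] linfin_scale[OF linfin_kappa] fin_scale fin_mono)
  also have "\<dots> = fscale (real (a + b)) (mono (E a b) {})"
    by (cases a; cases b) (simp_all add: fun_eq_iff fscale_def algebra_simps)
  finally show ?thesis .
qed

lemma kappa_d_0': "kappa (d_mono 2 (E a b) {}) = fscale (real (a + b)) (mono (E a b) {})"
  using kappa_d_0[of a b] by simp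

definition B0 :: "nat \<Rightarrow> form set" where
  "B0 s = Mset {} (Suc s) \<union> {mono (E (Suc s) 1) {}, mono (E 1 (Suc s)) {}}"

lemma SSm0: "SSminus 2 (Suc s) 0 = FV.span (B0 s)"
proof
  have MB: "Mset {} (Suc s) \<subseteq> FV.span (B0 s)" unfolding B0_def by (meson FV.span_superset Un_subset_iff)
  have mB: "mono (E a b) {} \<in> FV.span (B0 s)" if "a + b \<le> Suc s" for a b
  proof -
    have "mono (E a b) {} \<in> Mset {} (Suc s)" unfolding Mset_iff using that by blast
    then show ?thesis using MB by blast
  qed
  show "SSminus 2 (Suc s) 0 \<subseteq> FV.span (B0 s)"
  proof (rule SSminus_sub)
    fix j assume j: "j \<le> s"
    show "monosL 2 j 0 0 \<subseteq> FV.span (B0 s)"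
    proof
      fix m assume "m \<in> monosL 2 j 0 0"
      then obtain a b where "a + b = j" "m = mono (E a b) {}" using monosL2_0 by blast
      then show "m \<in> FV.span (B0 s)" using j mB by simp
    qed
  next
    fix l :: nat assume l: "1 \<le> l"
    show "kappa ` monosL 2 (s + l - 1) (0 + 1) l \<subseteq> FV.span (B0 s)"
    proof
      fix x assume "x \<in> kappa ` monosL 2 (s + l - 1) (0 + 1) l"
      then obtain m where x: "x = kappa m" and "m \<in> monosL 2 (s + l - 1) 1 l" by auto
      then obtain a b where ab: "a + b = s + l - 1" and
        c: "(m = mono (E a b) {0} \<and> l \<le> (if b = 1 then 1 else 0)) \<or> (m = mono (E a b) {1} \<and> l \<le> (if a = 1 then 1 else 0))"
        using monosL2_1 by blast
      have l1: "l = 1" using c l by (auto split: if_splits)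
      from c show "x \<in> FV.span (B0 s)"
      proof
        assume "m = mono (E a b) {0} \<and> l \<le> (if b = 1 then 1 else 0)"
        then show ?thesis using x ab l1 mB[of "Suc a" b] by simp
      next
        assume "m = mono (E a b) {1} \<and> l \<le> (if a = 1 then 1 else 0)"
        then show ?thesis using x ab l1 mB[of a "Suc b"] by simp
      qed
    qed
  next
    fix l :: nat assume "1 \<le> l"
    show "(\<lambda>m. ext_d 2 (kappa m)) ` monosL 2 (s + l) 0 l \<subseteq> FV.span (B0 s)"
    proof
      fix x assume "x \<in> (\<lambda>m. ext_d 2 (kappa m)) ` monosL 2 (s + l) 0 l"
      then obtain m where x: "x = ext_d 2 (kappa m)" and "m \<in> monosL 2 (s + l) 0 l" by auto
      then obtain a b where "m = mono (E a b) {}" using monosL2_0 by blast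
      then have "x = 0" using x linfin_zero[OF linfin_ext_d] by simp
      then show "x \<in> FV.span (B0 s)" by (simp add: FV.span_zero)
    qed
  next
    fix j assume j: "j \<le> s"
    show "kappa ` monosL 2 j (0 + 1) 0 \<subseteq> FV.span (B0 s)"
    proof
      fix x assume "x \<in> kappa ` monosL 2 j (0 + 1) 0"
      then obtain m where x: "x = kappa m" and "m \<in> monosL 2 j 1 0" by auto
      then obtain a b where ab: "a + b = j" and
        c: "m = mono (E a b) {0} \<or> m = mono (E a b) {1}"
        using monosL2_1 by blast
      from c show "x \<in> FV.span (B0 s)"
      proof
        assume "m = mono (E a b) {0}"
        then show ?thesis using x ab j mB[of "Suc a" b] by simp
      next
        assume "m = mono (E a b) {1}"
        then show ?thesis using x ab j mB[of a "Suc b"] by simp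
      qed
    qed
  next
    fix l :: nat assume "1 \<le> l"
    show "(\<lambda>m. kappa (kappa m)) ` monosL 2 (s + l - 1) (0 + 2) l \<subseteq> FV.span (B0 s)"
      using monosL2_2l[OF \<open>1 \<le> l\<close>] by simp
  next
    fix l :: nat assume l: "1 \<le> l"
    show "(\<lambda>m. kappa (ext_d 2 (kappa m))) ` monosL 2 (s + l) (0 + 1) l \<subseteq> FV.span (B0 s)"
    proof
      fix x assume "x \<in> (\<lambda>m. kappa (ext_d 2 (kappa m))) ` monosL 2 (s + l) (0 + 1) l"
      then obtain m where x: "x = kappa (ext_d 2 (kappa m))" and "m \<in> monosL 2 (s + l) 1 l" by auto
      then obtain a b where ab: "a + b = s + l" and
        c: "(m = mono (E a b) {0} \<and> l \<le> (if b = 1 then 1 else 0)) \<or> (m = mono (E a b) {1} \<and> l \<le> (if a = 1 then 1 else 0))"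
        using monosL2_1 by blast
      from c show "x \<in> FV.span (B0 s)"
      proof
        assume h: "m = mono (E a b) {0} \<and> l \<le> (if b = 1 then 1 else 0)"
        then have "b = 1" "l = 1" using l by (auto split: if_splits)
        then have "a = s" using ab by simp
        have "mono (E (Suc s) 1) {} \<in> B0 s" by (simp add: B0_def)
        then have "fscale (real (Suc s + 1)) (mono (E (Suc s) 1) {}) \<in> FV.span (B0 s)"
          by (intro FV.span_scale FV.span_base)
        then show ?thesis using x h \<open>b = 1\<close> \<open>a = s\<close> by (simp add: kappa_d_0')
      next
        assume h: "m = mono (E a b) {1} \<and> l \<le> (if a = 1 then 1 else 0)"
        then have "a = 1" "l = 1" using l by (auto split: if_splits)
        then have "b = s" using ab by simp
        have "mono (E 1 (Suc s)) {} \<in> B0 s" by (simp add: B0_def)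
        then have "fscale (real (1 + Suc s)) (mono (E 1 (Suc s)) {}) \<in> FV.span (B0 s)"
          by (intro FV.span_scale FV.span_base)
        then show ?thesis using x h \<open>a = 1\<close> \<open>b = s\<close> by (simp add: kappa_d_0')
      qed
    qed
  qed
next
  show "FV.span (B0 s) \<subseteq> SSminus 2 (Suc s) 0"
  proof (rule FV.span_minimal)
    show sub: "FV.subspace (SSminus 2 (Suc s) 0)" unfolding SSminus_def by simp
    have top: "mono (E a b) {} \<in> SSminus 2 (Suc s) 0" if "a + b = Suc s" for a b
    proof (cases a)
      case 0
      then have b: "b = Suc s" using that by simp
      have "mono (E 0 s) {1} \<in> monosL 2 s (0 + 1) 0" by (rule monosL2_intro) auto
      from G4[OF order_refl this] show ?thesis using 0 b by simp
    next
      case (Suc a')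
      have "mono (E a' b) {0} \<in> monosL 2 s (0 + 1) 0" by (rule monosL2_intro) (use that Suc in auto)
      from G4[OF order_refl this] show ?thesis using Suc by simp
    qed
    have ex1: "mono (E (Suc s) 1) {} \<in> SSminus 2 (Suc s) 0"
    proof -
      have "mono (E s 1) {0} \<in> monosL 2 (s + 1) (0 + 1) 1" by (rule monosL2_intro) (auto simp: ldeg_0)
      from G6[OF order_refl this]
      have "fscale (real (Suc s + 1)) (mono (E (Suc s) 1) {}) \<in> SSminus 2 (Suc s) 0" by (simp add: kappa_d_0')
      from FV.subspace_scale[OF sub this, of "1 / real (Suc s + 1)"] show ?thesis
        by (simp add: fscale_def)
    qed
    have ex2: "mono (E 1 (Suc s)) {} \<in> SSminus 2 (Suc s) 0"
    proof -
      have "mono (E 1 s) {1} \<in> monosL 2 (s + 1) (0 + 1) 1" by (rule monosL2_intro) (auto simp: ldeg_1 ldeg_1')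
      from G6[OF order_refl this]
      have "fscale (real (1 + Suc s)) (mono (E 1 (Suc s)) {}) \<in> SSminus 2 (Suc s) 0" by (simp add: kappa_d_0')
      from FV.subspace_scale[OF sub this, of "1 / real (1 + Suc s)"] show ?thesis
        by (simp add: fscale_def)
    qed
    show "B0 s \<subseteq> SSminus 2 (Suc s) 0"
    proof
      fix m assume "m \<in> B0 s"
      then consider (M) a b where "a + b \<le> Suc s" "m = mono (E a b) {}"
        | (e1) "m = mono (E (Suc s) 1) {}" | (e2) "m = mono (E 1 (Suc s)) {}"
        by (simp only: B0_def Un_iff insert_iff empty_iff Mset_iff) blast
      then show "m \<in> SSminus 2 (Suc s) 0"
      proof cases
        case (M a b)
        show ?thesis
        proof (cases "a + b \<le> s")
          case True
          have "mono (E a b) {} \<in> monosL 2 (a + b) 0 0" by (rule monosL2_intro) auto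
          from G1[OF True this] show ?thesis using M by simp
        next
          case False then show ?thesis using M top by simp
        qed
      qed (use ex1 ex2 in auto)
    qed
  qed
qed

lemma dof0_main: "dof (int (t + 4)) 0 2 = 4 * int (t + 4) + int ((t + 1) choose 2) + int (t + 1)"
proof -
  have m: "min 2 (int (t + 4) div 2 + 0) = 2" by simp
  have I: "{0..2::int} = {0, 1, 2}" by auto
  have n: "nat (1 + int t) = Suc t" by simp
  show ?thesis unfolding dof_def m I by (simp add: bin_def n)
qed

lemma dof0_small: "dof 1 0 2 = 4" "dof 2 0 2 = 8" "dof 3 0 2 = 12"
proof -
  have I0: "{0..0::int} = {0}" and I1: "{0..1::int} = {0, 1}" by auto
  show "dof 1 0 2 = 4" unfolding dof_def by (simp add: bin_def)
  show "dof 2 0 2 = 8" unfolding dof_def by (simp add: bin_def I1)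
  show "dof 3 0 2 = 12" unfolding dof_def by (simp add: bin_def I1)
qed

lemma two_choose2: "2 * (Suc t choose 2) = Suc t * t"
  by (induction t) (auto simp: numeral_2_eq_2)

lemma mono0_in_Mset: "mono (E a b) \<sigma> \<in> Mset \<tau> r \<longleftrightarrow> a + b \<le> r \<and> \<sigma> = \<tau>"
  unfolding Mset_iff by auto

lemma card_B0: "2 * card (B0 s) = (if s = 0 then 8 else (s + 2) * (s + 3) + 4)"
proof (cases s)
  case 0
  have "B0 s = insert (mono (E 1 1) {}) (Mset {} 1)" using 0 by (simp add: B0_def)
  moreover have "mono (E 1 1) {} \<notin> Mset {} 1" by (simp add: mono0_in_Mset)
  ultimately have "card (B0 s) = Suc (card (T 1))" by (simp add: finite_Mset card_Mset)
  moreover have "2 * card (T 1) = 6" using card_T[of 1] by simp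
  ultimately show ?thesis using 0 by simp
next
  case (Suc t)
  have "B0 s = insert (mono (E (Suc s) 1) {}) (insert (mono (E 1 (Suc s)) {}) (Mset {} (Suc s)))"
    by (simp add: B0_def)
  moreover have "mono (E (Suc s) 1) {} \<notin> insert (mono (E 1 (Suc s)) {}) (Mset {} (Suc s))"
    using Suc by (simp add: mono0_in_Mset)
  moreover have "mono (E 1 (Suc s)) {} \<notin> Mset {} (Suc s)" by (simp add: mono0_in_Mset)
  ultimately have "card (B0 s) = Suc (Suc (card (T (Suc s))))" by (simp add: finite_Mset card_Mset)
  then show ?thesis using card_T[of "Suc s"] Suc by (simp add: algebra_simps)
qed

lemma dof0: "dof (int (Suc s)) 0 2 = int (card (B0 s))"
proof -
  have "2 * dof (int (Suc s)) 0 2 = int (2 * card (B0 s))"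
  proof (cases "s \<le> 2")
    case True
    then have "s = 0 \<or> s = 1 \<or> s = 2" by auto
    then show ?thesis
    proof (elim disjE)
      assume "s = 0" then show ?thesis unfolding card_B0 using dof0_small(1) by simp
    next
      assume "s = 1" then show ?thesis unfolding card_B0 using dof0_small(2) by simp
    next
      assume "s = 2" then show ?thesis unfolding card_B0 using dof0_small(3) by simp
    qed
  next
    case False
    then have "\<exists>t. s = t + 3" by presburger
    then obtain t where t: "s = t + 3" by blast
    have e: "int (Suc s) = int (t + 4)" using t by simp
    have c: "2 * int (Suc t choose 2) = int (Suc t) * int t"
    proof -
      have "int (2 * (Suc t choose 2)) = int (Suc t * t)" using two_choose2[of t] by (rule arg_cong)
      then show ?thesis by (simp only: of_nat_mult of_nat_numeral)
    qed
    have cb: "2 * card (B0 s) = (s + 2) * (s + 3) + 4" unfolding card_B0 using t by simp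
    have "2 * dof (int (Suc s)) 0 2 = 8 * int (t + 4) + 2 * int (Suc t choose 2) + 2 * int (t + 1)"
      unfolding e dof0_main by simp
    also have "\<dots> = int ((s + 2) * (s + 3) + 4)" unfolding c t by (simp add: algebra_simps)
    finally show ?thesis unfolding cb .
  qed
  then show ?thesis by simp
qed

lemma B0_mem: "x \<in> B0 s \<Longrightarrow> \<exists>a b. x = mono (E a b) {}"
  by (simp only: B0_def Un_iff insert_iff empty_iff Mset_iff) blast

lemma B0_indep: "FV.independent (B0 s)"
  by (rule indep_monos) (use B0_mem in blast)

lemma B0_finite: "finite (B0 s)"
  by (simp add: B0_def finite_Mset)

lemma B0_fin: "x \<in> B0 s \<Longrightarrow> fin x"
  using B0_mem by fastforce

lemma B0_poly2: "x \<in> B0 s \<Longrightarrow> poly2 x"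
  using B0_mem by fastforce

lemma main0: "dof (int (Suc s)) 0 2 = int (fdim (restrict_cube 2 ` SSminus 2 (Suc s) 0))"
  using dim_restrict[OF B0_finite B0_indep B0_fin B0_poly2] dof0[of s] SSm0[of s] by simp

lemma main2: "dof (int (Suc s)) 2 2 = int (fdim (restrict_cube 2 ` SSminus 2 (Suc s) 2))"
  using dim_restrict[OF finite_Mset Mset_indep Mset_fin Mset_poly2, of "{0, 1}" s] dof2[of s] SSm2[of s] card_Mset[of "{0, 1}" s]
  by simp

section \<open>Case k = 1\<close>

definition K :: "nat \<Rightarrow> nat \<Rightarrow> form" where
  "K s a = mono (E (Suc a) (s - a)) {1} - mono (E a (Suc s - a)) {0}"

definition BM :: "nat \<Rightarrow> form set" where
  "BM s = Mset {0} s \<union> Mset {1} s \<union>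
     {mono (E (Suc s) 0) {1}, mono (E 0 (Suc s)) {0}, mono (E 1 s) {1}, mono (E s 1) {0}}"

definition B1 :: "nat \<Rightarrow> form set" where
  "B1 s = BM s \<union> K s ` {1..s - 1}"

lemma kappa_K: "a \<le> s \<Longrightarrow> kappa (mono (E a (s - a)) {0, 1}) = K s a"
  unfolding K_def by (simp add: Suc_diff_le)

lemma d_P: "ext_d 2 (kappa (mono (E s 1) {0})) =
    fscale (real (Suc s)) (mono (E s 1) {0}) + fscale 1 (mono (E (Suc s) 0) {1})"
  by (simp add: d_M)

lemma d_R: "ext_d 2 (kappa (mono (E 1 s) {1})) =
    fscale 1 (mono (E 0 (Suc s)) {0}) + fscale (real (Suc s)) (mono (E 1 s) {1})"
  by (simp add: d_M)

lemma BM_mem: "x \<in> BM s \<Longrightarrow> (\<exists>a b. a + b \<le> s \<and> (x = mono (E a b) {0} \<or> x = mono (E a b) {1})) \<or>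
   x = mono (E (Suc s) 0) {1} \<or> x = mono (E 0 (Suc s)) {0} \<or> x = mono (E 1 s) {1} \<or> x = mono (E s 1) {0}"
  by (simp only: BM_def Un_iff insert_iff empty_iff Mset_iff) blast

lemma BM_mono: "x \<in> BM s \<Longrightarrow> \<exists>\<alpha> \<sigma>. x = mono \<alpha> \<sigma>"
  using BM_mem by blast

lemma SSm1_upper: "SSminus 2 (Suc s) 1 \<subseteq> FV.span (B1 s)"
proof -
  have BMs: "BM s \<subseteq> FV.span (B1 s)" unfolding B1_def using FV.span_superset by blast
  have BKs: "K s a \<in> FV.span (B1 s)" if "1 \<le> a" "a \<le> s - 1" for a
    unfolding B1_def using that by (intro FV.span_base) auto
  have mB: "mono (E a b) {0} \<in> FV.span (B1 s)" "mono (E a b) {1} \<in> FV.span (B1 s)" if "a + b \<le> s" for a b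
  proof -
    have "mono (E a b) {0} \<in> Mset {0} s" "mono (E a b) {1} \<in> Mset {1} s"
      using that by (simp_all only: mono0_in_Mset)
    then have "mono (E a b) {0} \<in> BM s" "mono (E a b) {1} \<in> BM s"
      unfolding BM_def by blast+
    then show "mono (E a b) {0} \<in> FV.span (B1 s)" "mono (E a b) {1} \<in> FV.span (B1 s)" using BMs by blast+
  qed
  have ex: "mono (E (Suc s) 0) {1} \<in> FV.span (B1 s)" "mono (E 0 (Suc s)) {0} \<in> FV.span (B1 s)"
    "mono (E 1 s) {1} \<in> FV.span (B1 s)" "mono (E s 1) {0} \<in> FV.span (B1 s)"
    using BMs unfolding BM_def by blast+
  show ?thesis
  proof (rule SSminus_sub)
    fix j assume j: "j \<le> s"
    show "monosL 2 j 1 0 \<subseteq> FV.span (B1 s)"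
    proof
      fix m assume "m \<in> monosL 2 j 1 0"
      then obtain a b where ab: "a + b = j" and c: "m = mono (E a b) {0} \<or> m = mono (E a b) {1}"
        using monosL2_1 by blast
      then show "m \<in> FV.span (B1 s)" using mB[of a b] j by auto
    qed
  next
    fix l :: nat assume "1 \<le> l"
    show "kappa ` monosL 2 (s + l - 1) (1 + 1) l \<subseteq> FV.span (B1 s)"
      using monosL2_2l[OF \<open>1 \<le> l\<close>] by simp
  next
    fix l :: nat assume l: "1 \<le> l"
    show "(\<lambda>m. ext_d 2 (kappa m)) ` monosL 2 (s + l) 1 l \<subseteq> FV.span (B1 s)"
    proof
      fix x assume "x \<in> (\<lambda>m. ext_d 2 (kappa m)) ` monosL 2 (s + l) 1 l"
      then obtain m where x: "x = ext_d 2 (kappa m)" and "m \<in> monosL 2 (s + l) 1 l" by auto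
      then obtain a b where ab: "a + b = s + l" and
        c: "(m = mono (E a b) {0} \<and> l \<le> (if b = 1 then 1 else 0)) \<or> (m = mono (E a b) {1} \<and> l \<le> (if a = 1 then 1 else 0))"
        using monosL2_1 by blast
      from c show "x \<in> FV.span (B1 s)"
      proof
        assume h: "m = mono (E a b) {0} \<and> l \<le> (if b = 1 then 1 else 0)"
        then have "b = 1" "l = 1" using l by (auto split: if_splits)
        then have "a = s" using ab by simp
        have "x = fscale (real (Suc s)) (mono (E s 1) {0}) + fscale 1 (mono (E (Suc s) 0) {1})"
          using x h \<open>b = 1\<close> \<open>a = s\<close> d_P by simp
        then show ?thesis using ex by (simp add: FV.span_add FV.span_scale)
      next
        assume h: "m = mono (E a b) {1} \<and> l \<le> (if a = 1 then 1 else 0)"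
        then have "a = 1" "l = 1" using l by (auto split: if_splits)
        then have "b = s" using ab by simp
        have "x = fscale 1 (mono (E 0 (Suc s)) {0}) + fscale (real (Suc s)) (mono (E 1 s) {1})"
          using x h \<open>a = 1\<close> \<open>b = s\<close> d_R by simp
        then show ?thesis using ex by (simp add: FV.span_add FV.span_scale)
      qed
    qed
  next
    fix j assume j: "j \<le> s"
    show "kappa ` monosL 2 j (1 + 1) 0 \<subseteq> FV.span (B1 s)"
    proof
      fix x assume "x \<in> kappa ` monosL 2 j (1 + 1) 0"
      then obtain m where x: "x = kappa m" and "m \<in> monosL 2 j 2 0" by auto
      then obtain a b where ab: "a + b = j" and m: "m = mono (E a b) {0, 1}" using monosL2_2 by blast
      have kx: "x = mono (E (Suc a) b) {1} - mono (E a (Suc b)) {0}" using x m by simp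
      show "x \<in> FV.span (B1 s)"
      proof (cases "j < s")
        case True
        then show ?thesis using kx ab mB[of "Suc a" b] mB[of a "Suc b"] by (simp add: FV.span_diff)
      next
        case False
        then have js: "j = s" using j by simp
        show ?thesis
        proof (cases "a = 0")
          case True
          then show ?thesis using kx ab js ex by (simp add: FV.span_diff)
        next
          case a0: False
          show ?thesis
          proof (cases "a = s")
            case True
            then show ?thesis using kx ab js ex by (simp add: FV.span_diff)
          next
            case False
            have b: "b = s - a" and as: "a \<le> s" using ab js by auto
            have "x = K s a" unfolding x m b using kappa_K[OF as] .
            then show ?thesis using BKs[of a] a0 False ab js by simp
          qed
        qed
      qed
    qed
  next
    fix l :: nat assume "1 \<le> l"
    show "(\<lambda>m. kappa (kappa m)) ` monosL 2 (s + l - 1) (1 + 2) l \<subseteq> FV.span (B1 s)"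
      using monosL2_k3[of "1 + 2"] by simp
  next
    fix l :: nat assume "1 \<le> l"
    show "(\<lambda>m. kappa (ext_d 2 (kappa m))) ` monosL 2 (s + l) (1 + 1) l \<subseteq> FV.span (B1 s)"
      using monosL2_2l[OF \<open>1 \<le> l\<close>] by simp
  qed
qed

lemma SSm1_lower: "B1 s \<subseteq> SSminus 2 (Suc s) 1"
proof -
  let ?V = "SSminus 2 (Suc s) 1"
  have sub: "FV.subspace ?V" unfolding SSminus_def by simp
  have low: "mono (E a b) \<sigma> \<in> ?V" if "a + b \<le> s" "\<sigma> = {0} \<or> \<sigma> = {1}" for a b \<sigma>
  proof -
    have "mono (E a b) \<sigma> \<in> monosL 2 (a + b) 1 0" by (rule monosL2_intro) (use that in auto)
    from G1[OF that(1) this] show ?thesis .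
  qed
  have Kin: "K s a \<in> ?V" if "a \<le> s" for a
  proof -
    have "mono (E a (s - a)) {0, 1} \<in> monosL 2 s (1 + 1) 0" by (rule monosL2_intro) (use that in auto)
    from G4[OF order_refl this] show ?thesis using kappa_K[OF that] by simp
  qed
  have D1: "ext_d 2 (kappa (mono (E s 1) {0})) \<in> ?V"
  proof -
    have "mono (E s 1) {0} \<in> monosL 2 (s + 1) 1 1" by (rule monosL2_intro) (auto simp: ldeg_0)
    from G3[OF order_refl this] show ?thesis .
  qed
  have D2: "ext_d 2 (kappa (mono (E 1 s) {1})) \<in> ?V"
  proof -
    have "mono (E 1 s) {1} \<in> monosL 2 (s + 1) 1 1" by (rule monosL2_intro) (auto simp: ldeg_1 ldeg_1')
    from G3[OF order_refl this] show ?thesis .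
  qed
  have eP: "mono (E s 1) {0} = fscale (1 / real (s + 2)) (ext_d 2 (kappa (mono (E s 1) {0})) - K s s)"
    unfolding d_P K_def by (simp add: fun_eq_iff fscale_def field_simps)
  have P: "mono (E s 1) {0} \<in> ?V"
    by (subst eP) (intro FV.subspace_scale[OF sub] FV.subspace_diff[OF sub] D1 Kin, simp)
  have eQ: "mono (E (Suc s) 0) {1} = K s s + mono (E s 1) {0}"
    unfolding K_def by (simp add: fun_eq_iff)
  have Q: "mono (E (Suc s) 0) {1} \<in> ?V"
    unfolding eQ by (intro FV.subspace_add[OF sub] P Kin) simp
  have eR: "mono (E 1 s) {1} = fscale (1 / real (s + 2)) (ext_d 2 (kappa (mono (E 1 s) {1})) + K s 0)"
    unfolding d_R K_def by (simp add: fun_eq_iff fscale_def field_simps)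
  have R: "mono (E 1 s) {1} \<in> ?V"
    by (subst eR) (intro FV.subspace_scale[OF sub] FV.subspace_add[OF sub] D2 Kin, simp)
  have eU: "mono (E 0 (Suc s)) {0} = mono (E 1 s) {1} - K s 0"
    unfolding K_def by (simp add: fun_eq_iff)
  have U: "mono (E 0 (Suc s)) {0} \<in> ?V"
    unfolding eU by (intro FV.subspace_diff[OF sub] R Kin) simp
  show ?thesis
  proof
    fix x assume "x \<in> B1 s"
    then consider (M) "x \<in> BM s" | (K) a where "a \<in> {1..s - 1}" "x = K s a" unfolding B1_def by blast
    then show "x \<in> ?V"
    proof cases
      case M
      from BM_mem[OF this] show ?thesis
      proof (elim disjE exE conjE)
        fix a b assume "a + b \<le> s" "x = mono (E a b) {0}" then show ?thesis using low by simp
      next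
        fix a b assume "a + b \<le> s" "x = mono (E a b) {1}" then show ?thesis using low by simp
      qed (use P Q R U in simp_all)
    next
      case (K a)
      then have "a \<le> s" by auto
      then show ?thesis using Kin K by simp
    qed
  qed
qed

lemma SSm1: "SSminus 2 (Suc s) 1 = FV.span (B1 s)"
proof
  show "SSminus 2 (Suc s) 1 \<subseteq> FV.span (B1 s)" by (rule SSm1_upper)
  show "FV.span (B1 s) \<subseteq> SSminus 2 (Suc s) 1"
    by (rule FV.span_minimal[OF SSm1_lower]) (simp add: SSminus_def)
qed

lemma mono_sym: "mono \<alpha> \<sigma> (\<beta>, \<tau>) = mono \<beta> \<tau> (\<alpha>, \<sigma>)"
  by (auto simp: mono_apply)

lemma K_apply: "K s a p = mono (E (Suc a) (s - a)) {1} p - mono (E a (Suc s - a)) {0} p"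
  by (simp add: K_def)

lemma K_at_own: "K s a (E (Suc a) (s - a), {1}) = 1"
  by (simp add: K_apply mono_apply)

lemma K_at_other: "a' \<noteq> a \<Longrightarrow> K s a' (E (Suc a) (s - a), {1}) = 0"
  by (simp add: K_apply mono_apply)

lemma BM_at_pts:
  assumes x: "x \<in> BM s" and a: "1 \<le> a" "a \<le> s - 1"
  shows "x (E (Suc a) (s - a), {1}) = 0" "x (E a (Suc s - a), {0}) = 0"
proof -
  have s1: "1 \<le> s" "a < s" "0 < a" using a by auto
  from BM_mem[OF x]
  have "x (E (Suc a) (s - a), {1}) = 0 \<and> x (E a (Suc s - a), {0}) = 0"
  proof (elim disjE exE conjE)
    fix c d assume cd: "c + d \<le> s" "x = mono (E c d) {0}"
    then show ?thesis using s1 by (auto simp: mono_apply)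
  next
    fix c d assume cd: "c + d \<le> s" "x = mono (E c d) {1}"
    then show ?thesis using s1 by (auto simp: mono_apply)
  qed (use s1 in \<open>auto simp: mono_apply\<close>)
  then show "x (E (Suc a) (s - a), {1}) = 0" "x (E a (Suc s - a), {0}) = 0" by auto
qed

lemma B1_indep: "FV.independent (B1 s)"
proof (rule indep_private)
  fix e assume e: "e \<in> B1 s"
  then consider (M) "e \<in> BM s" | (K) a where "a \<in> {1..s - 1}" "e = K s a" unfolding B1_def by blast
  then show "\<exists>p. e p \<noteq> 0 \<and> (\<forall>f\<in>B1 s. f \<noteq> e \<longrightarrow> f p = 0)"
  proof cases
    case M
    obtain \<alpha> \<sigma> where ea: "e = mono \<alpha> \<sigma>" using BM_mono[OF M] by blast
    have "\<forall>f\<in>B1 s. f \<noteq> e \<longrightarrow> f (\<alpha>, \<sigma>) = 0"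
    proof (intro ballI impI)
      fix f assume f: "f \<in> B1 s" "f \<noteq> e"
      then consider (M') "f \<in> BM s" | (K') a where "a \<in> {1..s - 1}" "f = K s a" unfolding B1_def by blast
      then show "f (\<alpha>, \<sigma>) = 0"
      proof cases
        case M'
        obtain \<beta> \<tau> where fb: "f = mono \<beta> \<tau>" using BM_mono[OF M'] by blast
        then have "(\<alpha>, \<sigma>) \<noteq> (\<beta>, \<tau>)" using f ea by auto
        then show ?thesis unfolding fb mono_apply by simp
      next
        case (K' a)
        then have a: "1 \<le> a" "a \<le> s - 1" by auto
        show ?thesis unfolding K'(2) K_apply mono_sym[of _ _ \<alpha> \<sigma>] ea[symmetric]
          using BM_at_pts[OF M a] by simp
      qed
    qed
    moreover have "e (\<alpha>, \<sigma>) \<noteq> 0" unfolding ea mono_apply by simp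
    ultimately show ?thesis by blast
  next
    case (K a)
    then have a: "1 \<le> a" "a \<le> s - 1" by auto
    have "\<forall>f\<in>B1 s. f \<noteq> e \<longrightarrow> f (E (Suc a) (s - a), {1}) = 0"
    proof (intro ballI impI)
      fix f assume f: "f \<in> B1 s" "f \<noteq> e"
      then consider (M') "f \<in> BM s" | (K') a' where "a' \<in> {1..s - 1}" "f = K s a'" unfolding B1_def by blast
      then show "f (E (Suc a) (s - a), {1}) = 0"
      proof cases
        case M'
        then show ?thesis using BM_at_pts[OF M' a] by simp
      next
        case (K' a')
        then have "a' \<noteq> a" using f K by auto
        then show ?thesis unfolding K'(2) by (rule K_at_other)
      qed
    qed
    moreover have "e (E (Suc a) (s - a), {1}) \<noteq> 0" unfolding K(2) K_at_own by simp
    ultimately show ?thesis by blast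
  qed
qed

lemma K_inj: "inj_on (K s) A"
proof (rule inj_onI)
  fix a a' assume "K s a = K s a'"
  then have "K s a' (E (Suc a) (s - a), {1}) = 1" using K_at_own[of s a] by simp
  then show "a = a'" using K_at_other[of a' a s] by (cases "a' = a") auto
qed

lemma K_notin_BM: "1 \<le> a \<Longrightarrow> a \<le> s - 1 \<Longrightarrow> K s a \<notin> BM s"
  using BM_at_pts(1)[of "K s a" s a] K_at_own[of s a] by auto

lemma finite_BM: "finite (BM s)"
  by (simp add: BM_def finite_Mset)

lemma finite_B1: "finite (B1 s)"
  by (simp add: B1_def finite_BM)

lemma card_MM: "card (Mset {0} s \<union> Mset {1} s) = 2 * card (T s)"
proof -
  have "Mset {0} s \<inter> Mset {1} s = {}" by (auto simp: Mset_iff)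
  then show ?thesis by (simp add: card_Un_disjoint finite_Mset card_Mset)
qed

lemma card_BM: "card (BM s) = (if s = 0 then 4 else 2 * card (T s) + 4)"
proof (cases s)
  case 0
  have "BM s = insert (mono (E 1 0) {1}) (insert (mono (E 0 1) {0}) (Mset {0} 0 \<union> Mset {1} 0))"
    using 0 by (auto simp: BM_def)
  moreover have "card (T 0) = 1" using card_T[of 0] by simp
  ultimately show ?thesis using 0 card_MM[of 0] by (simp add: finite_Mset mono0_in_Mset)
next
  case (Suc t)
  have "BM s = insert (mono (E (Suc s) 0) {1}) (insert (mono (E 0 (Suc s)) {0}) (insert (mono (E 1 s) {1})
      (insert (mono (E s 1) {0}) (Mset {0} s \<union> Mset {1} s))))"
    by (simp add: BM_def insert_commute)
  then show ?thesis using Suc card_MM[of s] by (simp add: finite_Mset mono0_in_Mset)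
qed

lemma card_B1: "card (B1 s) = (if s = 0 then 4 else 2 * card (T s) + 4 + (s - 1))"
proof -
  have d: "BM s \<inter> K s ` {1..s - 1} = {}" using K_notin_BM by auto
  have "card (B1 s) = card (BM s) + card (K s ` {1..s - 1})"
    unfolding B1_def by (rule card_Un_disjoint) (use d finite_BM in auto)
  also have "card (K s ` {1..s - 1}) = s - 1" by (simp add: card_image[OF K_inj])
  finally show ?thesis by (simp add: card_BM)
qed

lemma fin_diff: "fin a \<Longrightarrow> fin b \<Longrightarrow> fin (a - b)"
  unfolding fin_def by (rule finite_subset[of _ "supp a \<union> supp b"]) (auto simp: supp_def)

lemma poly2_diff:
  assumes "poly2 a" "poly2 b" shows "poly2 (a - b)"
  unfolding poly2_def
proof (intro ballI allI impI)
  fix p and i :: nat assume p: "p \<in> supp (a - b)" and i: "2 \<le> i"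
  then have "p \<in> supp a \<or> p \<in> supp b" by (auto simp: supp_def)
  then show "fst p i = 0" using assms i by (auto simp: poly2_def)
qed

lemma B1_fin: "x \<in> B1 s \<Longrightarrow> fin x"
proof -
  assume "x \<in> B1 s"
  then consider (M) "x \<in> BM s" | (K) a where "x = K s a" unfolding B1_def by blast
  then show ?thesis
  proof cases
    case M
    then obtain \<alpha> \<sigma> where "x = mono \<alpha> \<sigma>" using BM_mono by blast
    then show ?thesis by simp
  next
    case K then show ?thesis by (simp add: K_def fin_diff)
  qed
qed

lemma B1_poly2: "x \<in> B1 s \<Longrightarrow> poly2 x"
proof -
  assume "x \<in> B1 s"
  then consider (M) "x \<in> BM s" | (K) a where "x = K s a" unfolding B1_def by blast
  then show ?thesis
  proof cases
    case M
    from BM_mem[OF M] show ?thesis by (elim disjE exE conjE) simp_all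
  next
    case K then show ?thesis by (simp add: K_def poly2_diff)
  qed
qed

lemma dof1_small: "dof 1 1 2 = 4"
  unfolding dof_def by (simp add: bin_def)

lemma dof1_main: "dof (int (t + 2)) 1 2 = 4 * int (t + 2) + int (Suc t) * int t + int (t + 2)"
proof -
  have m: "min 2 (int (t + 2) div 2 + 1) = 2" by simp
  have I: "{1..2::int} = {1, 2}" by auto
  have n1: "nat (1 + int t) = Suc t" and n2: "nat (int t + 2) = Suc (Suc t)" by auto
  have c2: "Suc (Suc t) choose Suc t = Suc (Suc t)" by (rule binomial_Suc_n)
  show ?thesis unfolding dof_def m I by (simp add: bin_def n1 n2 c2 algebra_simps)
qed

lemma dof1: "dof (int (Suc s)) 1 2 = int (card (B1 s))"
proof (cases s)
  case 0
  then show ?thesis using dof1_small by (simp add: card_B1)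
next
  case (Suc t)
  have e: "int (Suc s) = int (t + 2)" using Suc by simp
  have c: "2 * card (T s) = (s + 1) * (s + 2)" by (rule card_T)
  show ?thesis unfolding e dof1_main card_B1 using Suc c by (simp add: algebra_simps)
qed

lemma main1: "dof (int (Suc s)) 1 2 = int (fdim (restrict_cube 2 ` SSminus 2 (Suc s) 1))"
  using dim_restrict[OF finite_B1 B1_indep B1_fin B1_poly2] dof1[of s] SSm1[of s] by simp

theorem mainTheorem10:
  fixes r :: nat and k :: nat
  assumes "1 \<le> r" and "k \<le> 2"
  shows "dof (int r) (int k) 2 = int (fdim (restrict_cube 2 ` SSminus 2 r (int k)))"
proof -
  obtain s where r: "r = Suc s" using assms(1) by (cases r) auto
  from assms(2) have "k = 0 \<or> k = 1 \<or> k = 2" by auto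
  then show ?thesis
  proof (elim disjE)
    assume "k = 0" then show ?thesis using main0[of s] r by simp
  next
    assume "k = 1" then show ?thesis using main1[of s] r by simp
  next
    assume "k = 2" then show ?thesis using main2[of s] r by simp
  qed
qed

end
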